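(* Let $S_3^n=S_{K_3}^n$. Then $\chi_i'(S_3^1)=3$, $\chi_i'(S_3^2)=4$, and $\chi_i'(S_3^n)=5$ for every $n\ge 3$.
   Context: For a graph $H$ with at least one edge, an injective edge $k$-coloring is a map $c:E(H)\to\{1,\dots,k\}$ such that whenever $e_1=xy$, $e_2=yz$, $e_3=zu$ are edges of $H$ with $x,y,z$ distinct and $u\notin\{y,z\}$ (the case $u=x$ being allowed), we have $c(e_1)\ne c(e_3)$. The injective chromatic index $\chi_i'(H)$ is the least $k$ for which such a coloring exists. For a graph $G$ and positive integer $n$, the generalized Sierpiński graph $S_G^n$ has vertex set $V(G)^n$, and $(u_1,\dots,u_n)$, $(v_1,\dots,v_n)$ are adjacent if and only if there is $d\in\{1,\dots,n\}$ with $u_i=v_i$ for $i<d$, $u_dv_d\in E(G)$, and $u_i=v_d$, $v_i=u_d$ for all $i>d$. $K_3$ is the triangle. *)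

theory Defs
  imports Main
begin

text \<open>Simple graphs are given by a symmetric irreflexive adjacency relation E;
  edges are the two-element sets {x,y} with E x y.\<close>

definition inj_edge_coloring :: "('a \<Rightarrow> 'a \<Rightarrow> bool) \<Rightarrow> nat \<Rightarrow> ('a set \<Rightarrow> nat) \<Rightarrow> bool" where
  "inj_edge_coloring E k c \<longleftrightarrow>
     (\<forall>x y. E x y \<longrightarrow> c {x, y} \<in> {1..k}) \<and>
     (\<forall>x y z u. E x y \<and> E y z \<and> E z u \<and> x \<noteq> y \<and> y \<noteq> z \<and> x \<noteq> z \<and> u \<noteq> y \<and> u \<noteq> z
        \<longrightarrow> c {x, y} \<noteq> c {z, u})"

definition inj_chromatic_index :: "('a \<Rightarrow> 'a \<Rightarrow> bool) \<Rightarrow> nat" where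
  "inj_chromatic_index E = (LEAST k. \<exists>c. inj_edge_coloring E k c)"

text \<open>Generalized Sierpinski graph S_G^n, vertices = words of length n over V (0-indexed).\<close>
definition sierpinski_adj :: "'a set \<Rightarrow> ('a \<Rightarrow> 'a \<Rightarrow> bool) \<Rightarrow> nat \<Rightarrow> 'a list \<Rightarrow> 'a list \<Rightarrow> bool" where
  "sierpinski_adj V E n u v \<longleftrightarrow>
     length u = n \<and> length v = n \<and> set u \<subseteq> V \<and> set v \<subseteq> V \<and>
     (\<exists>d<n. take d u = take d v \<and> E (u ! d) (v ! d) \<and>
        (\<forall>i. d < i \<and> i < n \<longrightarrow> u ! i = v ! d \<and> v ! i = u ! d))"

definition K3_adj :: "nat \<Rightarrow> nat \<Rightarrow> bool" where
  "K3_adj x y \<longleftrightarrow> x \<in> {0,1,2} \<and> y \<in> {0,1,2} \<and> x \<noteq> y"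

abbreviation S3 :: "nat \<Rightarrow> nat list \<Rightarrow> nat list \<Rightarrow> bool" where
  "S3 n \<equiv> sierpinski_adj {0,1,2} K3_adj n"

end

theory Submission
  imports Defs
begin


lemma sadj_lengths: "sierpinski_adj V E n u v \<Longrightarrow> length u = n \<and> length v = n"
  by (simp add: sierpinski_adj_def)

lemma sadj_0: "\<not> sierpinski_adj V E 0 u v"
  by (simp add: sierpinski_adj_def)

lemma replicate_iff_nth: "length u = n \<Longrightarrow> (u = replicate n a) \<longleftrightarrow> (\<forall>i<n. u ! i = a)"
  by (metis in_set_conv_nth replicate_eqI nth_replicate)

lemma sadj_Suc: "sierpinski_adj V E (Suc n) (i#u) (j#v) \<longleftrightarrow>
   i \<in> V \<and> j \<in> V \<and> ((i = j \<and> sierpinski_adj V E n u v) \<or> (E i j \<and> u = replicate n j \<and> v = replicate n i))"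
proof
  assume H: "sierpinski_adj V E (Suc n) (i#u) (j#v)"
  then have L: "length u = n" "length v = n" "i \<in> V" "j \<in> V" "set u \<subseteq> V" "set v \<subseteq> V"
    by (auto simp: sierpinski_adj_def)
  from H obtain d where d: "d < Suc n" "take d (i#u) = take d (j#v)" "E ((i#u)!d) ((j#v)!d)"
    "\<forall>k. d < k \<and> k < Suc n \<longrightarrow> (i#u) ! k = (j#v) ! d \<and> (j#v) ! k = (i#u) ! d"
    by (auto simp: sierpinski_adj_def)
  show "i \<in> V \<and> j \<in> V \<and> ((i = j \<and> sierpinski_adj V E n u v) \<or> (E i j \<and> u = replicate n j \<and> v = replicate n i))"
  proof (cases d)
    case 0
    have "\<forall>k<n. u ! k = j" using d(4) 0 by (metis Suc_mono nth_Cons_0 nth_Cons_Suc zero_less_Suc)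
    moreover have "\<forall>k<n. v ! k = i" using d(4) 0 by (metis Suc_mono nth_Cons_0 nth_Cons_Suc zero_less_Suc)
    ultimately show ?thesis using L d 0 by (simp add: replicate_iff_nth)
  next
    case (Suc d')
    have "i = j" using d(2) Suc by simp
    moreover have "sierpinski_adj V E n u v"
      unfolding sierpinski_adj_def
    proof (intro conjI exI[of _ d'])
      show "d' < n" using d(1) Suc by simp
      show "take d' u = take d' v" using d(2) Suc by simp
      show "E (u ! d') (v ! d')" using d(3) Suc by simp
      show "\<forall>k. d' < k \<and> k < n \<longrightarrow> u ! k = v ! d' \<and> v ! k = u ! d'"
        using d(4) Suc by (metis Suc_less_eq nth_Cons_Suc)
    qed (use L in auto)
    ultimately show ?thesis using L by simp
  qed
next
  assume H: "i \<in> V \<and> j \<in> V \<and> ((i = j \<and> sierpinski_adj V E n u v) \<or> (E i j \<and> u = replicate n j \<and> v = replicate n i))"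
  show "sierpinski_adj V E (Suc n) (i#u) (j#v)"
  proof (cases "i = j \<and> sierpinski_adj V E n u v")
    case True
    then obtain d where d: "d < n" "take d u = take d v" "E (u!d) (v!d)"
      "\<forall>k. d < k \<and> k < n \<longrightarrow> u ! k = v ! d \<and> v ! k = u ! d"
      by (auto simp: sierpinski_adj_def)
    have L: "length u = n" "length v = n" "set u \<subseteq> V" "set v \<subseteq> V"
      using True by (auto simp: sierpinski_adj_def)
    have K: "\<forall>k. Suc d < k \<and> k < Suc n \<longrightarrow> (i#u) ! k = (j#v) ! Suc d \<and> (j#v) ! k = (i#u) ! Suc d"
    proof (intro allI impI)
      fix k assume "Suc d < k \<and> k < Suc n"
      then obtain k' where "k = Suc k'" "d < k'" "k' < n" by (cases k) auto
      then show "(i#u) ! k = (j#v) ! Suc d \<and> (j#v) ! k = (i#u) ! Suc d" using d(4) by simp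
    qed
    show ?thesis unfolding sierpinski_adj_def
      using L H True d K by (intro conjI exI[of _ "Suc d"]) auto
  next
    case False
    then have F: "E i j" "u = replicate n j" "v = replicate n i" using H by auto
    have K: "\<forall>k. 0 < k \<and> k < Suc n \<longrightarrow> (i#u) ! k = (j#v) ! 0 \<and> (j#v) ! k = (i#u) ! 0"
    proof (intro allI impI)
      fix k assume "0 < k \<and> k < Suc n"
      then obtain k' where "k = Suc k'" "k' < n" by (cases k) auto
      then show "(i#u) ! k = (j#v) ! 0 \<and> (j#v) ! k = (i#u) ! 0" using F by simp
    qed
    show ?thesis unfolding sierpinski_adj_def
      using H F K by (intro conjI exI[of _ 0]) auto
  qed
qed


definition L1 :: "(nat list \<times> nat list) list" where "L1 = [([0], [1]), ([0], [2]), ([1], [2]), ([1], [0]), ([2], [0]), ([2], [1])]"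
definition L2 :: "(nat list \<times> nat list) list" where "L2 = [([0,0], [0,1]), ([0,0], [0,2]), ([0,1], [0,2]), ([0,1], [1,0]), ([0,2], [2,0]), ([1,0], [1,1]), ([1,0], [1,2]), ([1,1], [1,2]), ([1,2], [2,1]), ([2,0], [2,1]), ([2,0], [2,2]), ([2,1], [2,2]), ([0,1], [0,0]), ([0,2], [0,0]), ([0,2], [0,1]), ([1,0], [0,1]), ([2,0], [0,2]), ([1,1], [1,0]), ([1,2], [1,0]), ([1,2], [1,1]), ([2,1], [1,2]), ([2,1], [2,0]), ([2,2], [2,0]), ([2,2], [2,1])]"

lemma S3_1_iff: "S3 1 x y \<longleftrightarrow> (x, y) \<in> set L1"
proof
  assume H: "S3 1 x y"
  then have "length x = 1" "length y = 1" using sadj_lengths by blast+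
  then obtain a b where "x = [a]" "y = [b]"
    by (metis One_nat_def length_0_conv length_Suc_conv)
  then show "(x, y) \<in> set L1" using H
    by (auto simp: sadj_Suc K3_adj_def L1_def sadj_0)
next
  assume "(x, y) \<in> set L1"
  then show "S3 1 x y" by (auto simp: sadj_Suc K3_adj_def L1_def sadj_0)
qed


lemma S3_2_iff: "S3 2 x y \<longleftrightarrow> (x, y) \<in> set L2"
proof
  assume H: "S3 2 x y"
  then have "length x = 2" "length y = 2" using sadj_lengths by blast+
  then obtain a b c d where xy: "x = [a,b]" "y = [c,d]"
    by (metis (no_types, lifting) One_nat_def Suc_1 length_0_conv length_Suc_conv)
  have V: "a \<in> {0,1,2}" "b \<in> {0,1,2}" "c \<in> {0,1,2}" "d \<in> {0,1,2}"
    using H xy by (auto simp: sierpinski_adj_def)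
  have H': "(a = c \<and> ([b],[d]) \<in> set L1) \<or> (K3_adj a c \<and> b = c \<and> d = a)"
    using H xy by (simp add: numeral_2_eq_2 sadj_Suc S3_1_iff[symmetric])
  show "(x, y) \<in> set L2" using V H' unfolding xy
    by (simp add: L1_def L2_def K3_adj_def) (elim disjE; simp)
next
  assume "(x, y) \<in> set L2"
  then show "S3 2 x y" by (auto simp: sadj_Suc K3_adj_def L2_def sadj_0 numeral_2_eq_2)
qed



definition pm :: "nat list \<Rightarrow> nat \<Rightarrow> nat" where
  "pm p x = (if 1 \<le> x \<and> x \<le> 5 then p ! (x - 1) else x)"

definition TL :: "nat list list" where "TL = [[1,2,3,4,5],[2,5,3,1,4],[1,5,2,3,4]]"
definition SL :: "nat list list" where "SL = [[2,1,4,3,5],[5,3,2,1,4],[3,2,1,4,5]]"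
definition bs :: "nat \<Rightarrow> nat \<Rightarrow> nat" where
  "bs i j = (if i + j = 1 then 4 else if i + j = 2 then 3 else 1)"

fun g :: "nat list \<Rightarrow> nat list \<Rightarrow> nat" where
  "g (i#u) (j#v) = (if i = j then pm ((if length u + length v = 2 then TL else SL) ! i) (g u v)
                    else if u = [] \<and> v = [] then i + j else bs i j)"
| "g _ _ = 0"

definition h2 :: "nat list \<Rightarrow> nat list \<Rightarrow> nat" where
  "h2 x y = (if hd x = hd y then [[1,2,3],[2,4,3],[1,4,2]] ! hd x ! (hd (tl x) + hd (tl y) - 1)
             else if hd x + hd y = 1 then 1 else if hd x + hd y = 2 then 4 else 3)"

definition Aset :: "nat \<Rightarrow> nat set" where
  "Aset j = [{1,2},{2,3},{2,5}] ! j"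
definition Dset :: "nat \<Rightarrow> nat set" where
  "Dset j = [{3,4},{1,4,5},{1,3}] ! j"

definition nbrs :: "('a \<times> 'a) list \<Rightarrow> 'a \<Rightarrow> 'a list" where
  "nbrs L y = map snd (filter (\<lambda>p. fst p = y) L)"

definition validL :: "('a \<times> 'a) list \<Rightarrow> ('a \<Rightarrow> 'a \<Rightarrow> nat) \<Rightarrow> bool" where
  "validL L f = list_all (\<lambda>(x,y). list_all (\<lambda>z. list_all (\<lambda>u. x = z \<or> u = y \<or> f x y \<noteq> f z u)
      (nbrs L z)) (nbrs L y)) L"

definition valid :: "('a \<Rightarrow> 'a \<Rightarrow> bool) \<Rightarrow> ('a \<Rightarrow> 'a \<Rightarrow> nat) \<Rightarrow> bool" where
  "valid E f \<longleftrightarrow> (\<forall>x y z u. E x y \<and> E y z \<and> E z u \<and> x \<noteq> y \<and> y \<noteq> z \<and> x \<noteq> z \<and> u \<noteq> y \<and> u \<noteq> z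
        \<longrightarrow> f x y \<noteq> f z u)"

lemma validL_imp:
  assumes "validL L f" "\<And>x y. E x y \<longleftrightarrow> (x, y) \<in> set L"
  shows "valid E f"
  unfolding valid_def
proof (intro allI impI, elim conjE)
  fix x y z u assume H: "E x y" "E y z" "E z u" "x \<noteq> z" "u \<noteq> y"
  have "z \<in> set (nbrs L y)" "u \<in> set (nbrs L z)" using H assms(2) by (force simp: nbrs_def)+
  then show "f x y \<noteq> f z u" using assms(1) H(1,4,5) assms(2)
    unfolding validL_def list_all_iff by fastforce
qed

lemma validL_1: "validL L1 g"
  by (simp add: validL_def L1_def nbrs_def bs_def)

lemma validL_2g: "validL L2 g"
  by (simp add: validL_def L2_def nbrs_def bs_def pm_def TL_def)

lemma validL_2h: "validL L2 h2"
  by (simp add: validL_def L2_def nbrs_def h2_def)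

lemma valid_1: "valid (S3 1) g" by (rule validL_imp[OF validL_1 S3_1_iff])
lemma valid_2g: "valid (S3 2) g" by (rule validL_imp[OF validL_2g S3_2_iff])
lemma valid_2h: "valid (S3 2) h2" by (rule validL_imp[OF validL_2h S3_2_iff])

lemma rng_1: "S3 1 x y \<Longrightarrow> g x y \<in> {1..3}"
  unfolding S3_1_iff by (auto simp: S3_1_iff L1_def)
lemma rng_2g: "S3 2 x y \<Longrightarrow> g x y \<in> {1..5}"
  unfolding S3_2_iff by (auto simp: S3_2_iff L2_def pm_def TL_def bs_def)
lemma rng_2h: "S3 2 x y \<Longrightarrow> h2 x y \<in> {1..4}"
  unfolding S3_2_iff by (auto simp: S3_2_iff L2_def h2_def)

lemma rep2: "replicate 2 j = [j, j]" by (simp add: numeral_2_eq_2)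

lemma corner2: "([j, j], v) \<in> set L2 \<Longrightarrow> (j, v) \<in> {(0,[0,1]),(0,[0,2]),(1,[1,0]),(1,[1,2]),(2,[2,0]),(2,[2,1])}"
  by (auto simp: L2_def)

lemma cA_2: "S3 2 (replicate 2 j) v \<Longrightarrow> g (replicate 2 j) v \<in> Aset j"
  unfolding S3_2_iff rep2 by (drule corner2) (auto simp: pm_def TL_def bs_def Aset_def)
lemma cD_2: "S3 2 (replicate 2 j) v \<Longrightarrow> S3 2 v w \<Longrightarrow> w \<noteq> replicate 2 j \<Longrightarrow> g v w \<in> Dset j"
  unfolding S3_2_iff rep2 
  apply (drule corner2)
  apply (elim insertE emptyE)
  apply (auto simp add: L2_def pm_def TL_def bs_def Dset_def)
  done



abbreviation "V3 \<equiv> {0::nat,1,2}"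

lemma S3_sym: "S3 n x y \<Longrightarrow> S3 n y x"
  unfolding sierpinski_adj_def K3_adj_def by (metis (no_types, lifting))

lemma S3_irrefl: "\<not> S3 n x x"
  by (auto simp: sierpinski_adj_def K3_adj_def)

lemma S3_Suc_cases:
  assumes "S3 (Suc n) x y"
  shows "(\<exists>i u v. x = i#u \<and> y = i#v \<and> i \<in> V3 \<and> S3 n u v) \<or>
         (\<exists>i j. i \<in> V3 \<and> j \<in> V3 \<and> i \<noteq> j \<and> x = i # replicate n j \<and> y = j # replicate n i)"
proof -
  from assms have "length x = Suc n" "length y = Suc n" using sadj_lengths by blast+
  then obtain i u j v where xy: "x = i#u" "y = j#v" by (metis length_Suc_conv)
  show ?thesis using assms unfolding xy sadj_Suc K3_adj_def by auto
qed

lemma rep_inj: "n \<ge> 1 \<Longrightarrow> replicate n j = replicate n k \<Longrightarrow> j = k"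
  by (cases n) auto

lemma S3_rep_rep: assumes H: "S3 n (replicate n j) (replicate n k)" shows "n = 1"
proof (cases n)
  case 0
  then show ?thesis using H sadj_0 by (metis) 
next
  case (Suc m)
  have "(j = k \<and> S3 m (replicate m j) (replicate m k)) \<or> (j \<noteq> k \<and> replicate m j = replicate m k)"
    using H unfolding Suc by (auto simp: sadj_Suc K3_adj_def)
  then show ?thesis using S3_irrefl Suc by (cases m) auto
qed

lemma g_int: "length u = n \<Longrightarrow> length v = n \<Longrightarrow> n \<ge> 2 \<Longrightarrow> g (i#u) (i#v) = pm (SL!i) (g u v)"
  by simp

lemma g_br: "i \<noteq> j \<Longrightarrow> n \<ge> 1 \<Longrightarrow> g (i # replicate n j) (j # replicate n i) = bs i j"
  by (cases n) auto

lemma g_sym: "g x y = g y x"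
  by (induction x y rule: g.induct) (auto simp: bs_def)

lemma V3_cases: "i \<in> V3 \<Longrightarrow> i = 0 \<or> i = 1 \<or> i = 2" by auto

lemma pm_range: "x \<in> {1..5} \<Longrightarrow> i \<in> V3 \<Longrightarrow> pm (SL!i) x \<in> {1..5}"
  by (auto simp: pm_def SL_def) (auto simp: nth_Cons split: nat.splits)

lemma five_cases: "(x::nat) \<in> {1..5} \<Longrightarrow> x = 1 \<or> x = 2 \<or> x = 3 \<or> x = 4 \<or> x = 5" by auto

lemma pm_inj: "x \<in> {1..5} \<Longrightarrow> y \<in> {1..5} \<Longrightarrow> i \<in> V3 \<Longrightarrow> pm (SL!i) x = pm (SL!i) y \<Longrightarrow> x = y"
  apply (drule five_cases)+ apply (drule V3_cases)
  apply (elim disjE) apply (simp_all add: pm_def SL_def)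
  done

lemma pm_A: "i \<in> V3 \<Longrightarrow> x \<in> Aset i \<Longrightarrow> pm (SL!i) x \<in> Aset i"
  by (auto simp: pm_def SL_def Aset_def)
lemma pm_D: "i \<in> V3 \<Longrightarrow> x \<in> Dset i \<Longrightarrow> pm (SL!i) x \<in> Dset i"
  by (auto simp: pm_def SL_def Dset_def)
lemma pm_AA: "i \<in> V3 \<Longrightarrow> j \<in> V3 \<Longrightarrow> i \<noteq> j \<Longrightarrow> x \<in> Aset j \<Longrightarrow> y \<in> Aset i \<Longrightarrow> pm (SL!i) x \<noteq> pm (SL!j) y"
  by (auto simp: pm_def SL_def Aset_def)
lemma pm_DB: "i \<in> V3 \<Longrightarrow> j \<in> V3 \<Longrightarrow> i \<noteq> j \<Longrightarrow> x \<in> Dset j \<Longrightarrow> pm (SL!i) x \<noteq> bs i j"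
  by (auto simp: pm_def SL_def Dset_def bs_def)
lemma bs_sym: "bs i j = bs j i" by (simp add: bs_def add.commute)
lemma bs_range: "bs i j \<in> {1..5}" by (simp add: bs_def)



definition rng :: "nat \<Rightarrow> bool" where
  "rng n \<longleftrightarrow> (\<forall>x y. S3 n x y \<longrightarrow> g x y \<in> {1..5})"
definition cA :: "nat \<Rightarrow> bool" where
  "cA n \<longleftrightarrow> (\<forall>j v. S3 n (replicate n j) v \<longrightarrow> g (replicate n j) v \<in> Aset j)"
definition cD :: "nat \<Rightarrow> bool" where
  "cD n \<longleftrightarrow> (\<forall>j v w. S3 n (replicate n j) v \<and> S3 n v w \<and> w \<noteq> replicate n j \<longrightarrow> g v w \<in> Dset j)"

lemma step_lemma:
  assumes n2: "2 \<le> n" and Vn: "valid (S3 n) g" and R: "rng n" and CA: "cA n" and CD: "cD n"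
  shows "valid (S3 (Suc n)) g \<and> rng (Suc n) \<and> cA (Suc n) \<and> cD (Suc n)"
proof (intro conjI)
  have gi: "g (i#u) (i#v) = pm (SL!i) (g u v)" if "S3 n u v" for i u v
    using that sadj_lengths[OF that] n2 by simp
  have gb: "g (i # replicate n j) (j # replicate n i) = bs i j" if "i \<noteq> j" for i j
    using g_br[OF that, of n] n2 by simp
  have n1: "n \<ge> 1" using n2 by simp
  have nrr: "\<not> S3 n (replicate n j) (replicate n k)" for j k
    using S3_rep_rep n2 by fastforce
  have Rn: "g a b \<in> {1..5}" if "S3 n a b" for a b using R that unfolding rng_def by blast
  have CAn: "g (replicate n j) v \<in> Aset j" if "S3 n (replicate n j) v" for j v
    using CA that unfolding cA_def by blast
  have CDn: "g v w \<in> Dset j" if "S3 n (replicate n j) v" "S3 n v w" "w \<noteq> replicate n j" for j v w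
    using CD that unfolding cD_def by blast
  have Vn': "g a b \<noteq> g c e" if "S3 n a b" "S3 n b c" "S3 n c e" "a \<noteq> b" "b \<noteq> c" "a \<noteq> c" "e \<noteq> b" "e \<noteq> c"
    for a b c e using Vn that unfolding valid_def by blast
  show "valid (S3 (Suc n)) g"
    unfolding valid_def
  proof (intro allI impI, elim conjE)
    fix x y z u
    assume e1: "S3 (Suc n) x y" and e2: "S3 (Suc n) y z" and e3: "S3 (Suc n) z u"
      and d: "x \<noteq> y" "y \<noteq> z" "x \<noteq> z" "u \<noteq> y" "u \<noteq> z"
    show "g x y \<noteq> g z u"
    proof (cases "\<exists>i x' y'. x = i#x' \<and> y = i#y' \<and> i \<in> V3 \<and> S3 n x' y'")
      case True
      then obtain i x' y' where X: "x = i#x'" "y = i#y'" "i \<in> V3" "S3 n x' y'" by blast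
      show ?thesis
      proof (cases "\<exists>i z' y'. z = i#z' \<and> y = i#y' \<and> i \<in> V3 \<and> S3 n y' z'")
        case True
        then obtain z' where Z: "z = i#z'" "S3 n y' z'" using X by auto
        show ?thesis
        proof (cases "\<exists>i z' u'. z = i#z' \<and> u = i#u' \<and> i \<in> V3 \<and> S3 n z' u'")
          case True
          then obtain u' where U: "u = i#u'" "S3 n z' u'" using Z by auto
          have ne: "g x' y' \<noteq> g z' u'"
            by (rule Vn') (use X Z U d in auto)
          have r1: "g x' y' \<in> {1..5}" by (rule Rn[OF X(4)])
          have r2: "g z' u' \<in> {1..5}" by (rule Rn[OF U(2)])
          have "pm (SL!i) (g x' y') \<noteq> pm (SL!i) (g z' u')"
            using pm_inj[OF r1 r2 X(3)] ne by blast
          then show ?thesis unfolding X(1,2) Z(1) U(1) gi[OF X(4)] gi[OF U(2)] .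
        next
          case False
          then obtain k l where B: "k \<in> V3" "l \<in> V3" "k \<noteq> l" "z = k # replicate n l" "u = l # replicate n k"
            using S3_Suc_cases[OF e3] by blast
          have ki: "k = i" and zr: "z' = replicate n l" using B Z by auto
          have "g y' x' \<in> Dset l"
            by (rule CDn) (use X Z d zr S3_sym in auto)
          then have "g x' y' \<in> Dset l" by (simp add: g_sym)
          then have "pm (SL!i) (g x' y') \<noteq> bs i l" using pm_DB[of i l] X B ki by blast
          moreover have "g x y = pm (SL!i) (g x' y')" unfolding X(1,2) by (rule gi[OF X(4)])
          moreover have "g z u = bs i l" unfolding B(4,5) ki by (rule gb) (use B ki in simp)
          ultimately show ?thesis by simp
        qed
      next
        case False
        then obtain k l where B: "k \<in> V3" "l \<in> V3" "k \<noteq> l" "y = k # replicate n l" "z = l # replicate n k"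
          using S3_Suc_cases[OF e2] by blast
        have ki: "k = i" and yr: "y' = replicate n l" using B X by auto
        show ?thesis
        proof (cases "\<exists>i z' u'. z = i#z' \<and> u = i#u' \<and> i \<in> V3 \<and> S3 n z' u'")
          case True
          then obtain u' where U: "u = l#u'" "S3 n (replicate n k) u'" using B by auto
          have a1: "g (replicate n l) x' \<in> Aset l" by (rule CAn) (use X yr S3_sym in auto)
          have a2: "g (replicate n k) u' \<in> Aset i" using CAn[OF U(2)] ki by simp
          have il: "i \<noteq> l" using B ki by simp
          have "g x y = pm (SL!i) (g x' y')" unfolding X(1,2) by (rule gi[OF X(4)])
          then have "g x y = pm (SL!i) (g (replicate n l) x')"
            using yr by (simp add: g_sym)
          moreover have "g z u = pm (SL!l) (g (replicate n k) u')"
            unfolding B(5) U(1) by (rule gi[OF U(2)])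
          ultimately show ?thesis using pm_AA[OF X(3) B(2) il a1] a2 ki by simp
        next
          case False
          then obtain k' l' where B': "z = k' # replicate n l'" "u = l' # replicate n k'"
            using S3_Suc_cases[OF e3] by blast
          have "k' = l" "replicate n l' = replicate n k" using B B' by auto
          then have "l' = k" using rep_inj[OF n1] by metis
          then have "y = u" using B B' ki \<open>k' = l\<close> by simp
          then show ?thesis using d by simp
        qed
      qed
    next
      case False
      then obtain k l where B: "k \<in> V3" "l \<in> V3" "k \<noteq> l" "x = k # replicate n l" "y = l # replicate n k"
        using S3_Suc_cases[OF e1] by blast
      show ?thesis
      proof (cases "\<exists>i z' y'. z = i#z' \<and> y = i#y' \<and> i \<in> V3 \<and> S3 n y' z'")
        case True
        then obtain z' where Z: "z = l#z'" "S3 n (replicate n k) z'" using B by auto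
        show ?thesis
        proof (cases "\<exists>i z' u'. z = i#z' \<and> u = i#u' \<and> i \<in> V3 \<and> S3 n z' u'")
          case True
          then obtain u' where U: "u = l#u'" "S3 n z' u'" using Z by auto
          have "u' \<noteq> replicate n k" using d U B by auto
          then have "g z' u' \<in> Dset k" using CDn Z U by blast
          then have "pm (SL!l) (g z' u') \<noteq> bs l k" using pm_DB[of l k] B by auto
          moreover have "g z u = pm (SL!l) (g z' u')" unfolding Z(1) U(1) by (rule gi[OF U(2)])
          moreover have "g x y = bs l k" unfolding B(4,5) using gb[of k l] B(3) bs_sym by simp
          ultimately show ?thesis by simp
        next
          case False
          then obtain k' l' where B': "z = k' # replicate n l'" "u = l' # replicate n k'"
            using S3_Suc_cases[OF e3] by blast
          then have "S3 n (replicate n k) (replicate n l')" using Z by auto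
          then show ?thesis using nrr by blast
        qed
      next
        case False
        then obtain k' l' where B': "y = k' # replicate n l'" "z = l' # replicate n k'"
          using S3_Suc_cases[OF e2] by blast
        have "k' = l" "replicate n l' = replicate n k" using B B' by auto
        then have "l' = k" using rep_inj[OF n1] by metis
        then have "x = z" using B B' \<open>k' = l\<close> by simp
        then show ?thesis using d by simp
      qed
    qed
  qed
  show "rng (Suc n)" unfolding rng_def
  proof (intro allI impI)
    fix x y assume e: "S3 (Suc n) x y"
    from S3_Suc_cases[OF e] show "g x y \<in> {1..5}"
    proof (elim disjE exE conjE)
      fix i u v assume H: "x = i#u" "y = i#v" "i \<in> V3" "S3 n u v"
      then show ?thesis using gi[OF H(4)] pm_range[OF Rn[OF H(4)] H(3)] by simp
    next
      fix i j assume "i \<noteq> j" "x = i # replicate n j" "y = j # replicate n i"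
      then show ?thesis using gb bs_range by simp
    qed
  qed
  show "cA (Suc n)" unfolding cA_def
  proof (intro allI impI)
    fix j v assume e: "S3 (Suc n) (replicate (Suc n) j) v"
    from S3_Suc_cases[OF e] show "g (replicate (Suc n) j) v \<in> Aset j"
    proof (elim disjE exE conjE)
      fix i u v' assume H: "replicate (Suc n) j = i#u" "v = i#v'" "i \<in> V3" "S3 n u v'"
      then have ij: "i = j" and ur: "u = replicate n j" by auto
      have "g (replicate n j) v' \<in> Aset j" using CAn H(4) ur by simp
      then have "pm (SL!j) (g (replicate n j) v') \<in> Aset j" using pm_A H(3) ij by simp
      then show ?thesis using gi[OF H(4)] H ij ur by simp
    next
      fix i k assume "i \<noteq> k" "replicate (Suc n) j = i # replicate n k"
      then show ?thesis using n1 rep_inj by auto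
    qed
  qed
  show "cD (Suc n)" unfolding cD_def
  proof (intro allI impI, elim conjE)
    fix j v w assume e: "S3 (Suc n) (replicate (Suc n) j) v" and e2: "S3 (Suc n) v w"
      and wn: "w \<noteq> replicate (Suc n) j"
    have "\<exists>v'. v = j#v' \<and> j \<in> V3 \<and> S3 n (replicate n j) v'"
      using S3_Suc_cases[OF e]
    proof (elim disjE exE conjE)
      fix i k assume "i \<noteq> k" "replicate (Suc n) j = i # replicate n k"
      then show ?thesis using n1 rep_inj by auto
    qed auto
    then obtain v' where V: "v = j#v'" "j \<in> V3" "S3 n (replicate n j) v'" by blast
    from S3_Suc_cases[OF e2] show "g v w \<in> Dset j"
    proof (elim disjE exE conjE)
      fix i v'' w' assume H: "v = i#v''" "w = i#w'" "i \<in> V3" "S3 n v'' w'"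
      then have ij: "i = j" and vv: "v'' = v'" using V by auto
      have "w' \<noteq> replicate n j" using wn H ij by auto
      then have "g v' w' \<in> Dset j" using CDn V(3) H(4) vv by simp
      then have "pm (SL!j) (g v' w') \<in> Dset j" using pm_D V(2) by simp
      then show ?thesis using gi[OF H(4)] H ij vv by simp
    next
      fix i k assume "v = i # replicate n k"
      then show ?thesis using V nrr by auto
    qed
  qed
qed

lemma cf: "inj_edge_coloring E k c \<Longrightarrow> E x y \<Longrightarrow> E y z \<Longrightarrow> E z u \<Longrightarrow> x \<noteq> y \<Longrightarrow> y \<noteq> z \<Longrightarrow> x \<noteq> z \<Longrightarrow> u \<noteq> y \<Longrightarrow> u \<noteq> z \<Longrightarrow> c {x, y} \<noteq> c {z, u}"
  unfolding inj_edge_coloring_def by blast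

lemmas s3eval = numeral_3_eq_3 sadj_Suc K3_adj_def

lemma csp_norm: fixes v0a v1a v2a v3a v4a v5a v6a v7a v8a v9a v10a v11a v12a v13a v14a v15a v16a v17a v18a v19a v20a v21a v22a v23a v24a :: nat
  assumes
    c0: "v0a = 1"
    and c1: "v2a = 2"
    and c2: "v5a = 3"
    and c3: "v6a = 4"
    and lo0: "1 \<le> v0a" and hi0: "v0a \<le> 4"
    and lo1: "1 \<le> v1a" and hi1: "v1a \<le> 4"
    and lo2: "1 \<le> v2a" and hi2: "v2a \<le> 4"
    and lo3: "1 \<le> v3a" and hi3: "v3a \<le> 4"
    and lo4: "1 \<le> v4a" and hi4: "v4a \<le> 4"
    and lo5: "1 \<le> v5a" and hi5: "v5a \<le> 4"
    and lo6: "1 \<le> v6a" and hi6: "v6a \<le> 4"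
    and lo7: "1 \<le> v7a" and hi7: "v7a \<le> 4"
    and lo8: "1 \<le> v8a" and hi8: "v8a \<le> 4"
    and lo9: "1 \<le> v9a" and hi9: "v9a \<le> 4"
    and lo10: "1 \<le> v10a" and hi10: "v10a \<le> 4"
    and lo11: "1 \<le> v11a" and hi11: "v11a \<le> 4"
    and lo12: "1 \<le> v12a" and hi12: "v12a \<le> 4"
    and lo13: "1 \<le> v13a" and hi13: "v13a \<le> 4"
    and lo14: "1 \<le> v14a" and hi14: "v14a \<le> 4"
    and lo15: "1 \<le> v15a" and hi15: "v15a \<le> 4"
    and lo16: "1 \<le> v16a" and hi16: "v16a \<le> 4"
    and lo17: "1 \<le> v17a" and hi17: "v17a \<le> 4"
    and lo18: "1 \<le> v18a" and hi18: "v18a \<le> 4"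
    and lo19: "1 \<le> v19a" and hi19: "v19a \<le> 4"
    and lo20: "1 \<le> v20a" and hi20: "v20a \<le> 4"
    and lo21: "1 \<le> v21a" and hi21: "v21a \<le> 4"
    and lo22: "1 \<le> v22a" and hi22: "v22a \<le> 4"
    and lo23: "1 \<le> v23a" and hi23: "v23a \<le> 4"
    and lo24: "1 \<le> v24a" and hi24: "v24a \<le> 4"
    and d_0_1: "v0a \<noteq> v1a"
    and d_0_2: "v0a \<noteq> v2a"
    and d_0_4: "v0a \<noteq> v4a"
    and d_0_5: "v0a \<noteq> v5a"
    and d_0_6: "v0a \<noteq> v6a"
    and d_1_2: "v1a \<noteq> v2a"
    and d_1_3: "v1a \<noteq> v3a"
    and d_1_9: "v1a \<noteq> v9a"
    and d_1_10: "v1a \<noteq> v10a"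
    and d_2_5: "v2a \<noteq> v5a"
    and d_2_6: "v2a \<noteq> v6a"
    and d_2_9: "v2a \<noteq> v9a"
    and d_2_10: "v2a \<noteq> v10a"
    and d_3_4: "v3a \<noteq> v4a"
    and d_3_7: "v3a \<noteq> v7a"
    and d_3_8: "v3a \<noteq> v8a"
    and d_4_8: "v4a \<noteq> v8a"
    and d_4_11: "v4a \<noteq> v11a"
    and d_4_12: "v4a \<noteq> v12a"
    and d_5_6: "v5a \<noteq> v6a"
    and d_5_7: "v5a \<noteq> v7a"
    and d_5_8: "v5a \<noteq> v8a"
    and d_6_7: "v6a \<noteq> v7a"
    and d_6_9: "v6a \<noteq> v9a"
    and d_6_11: "v6a \<noteq> v11a"
    and d_7_9: "v7a \<noteq> v9a"
    and d_7_11: "v7a \<noteq> v11a"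
    and d_8_10: "v8a \<noteq> v10a"
    and d_8_12: "v8a \<noteq> v12a"
    and d_9_10: "v9a \<noteq> v10a"
    and d_9_11: "v9a \<noteq> v11a"
    and d_9_12: "v9a \<noteq> v12a"
    and d_10_11: "v10a \<noteq> v11a"
    and d_10_13: "v10a \<noteq> v13a"
    and d_10_14: "v10a \<noteq> v14a"
    and d_11_13: "v11a \<noteq> v13a"
    and d_11_14: "v11a \<noteq> v14a"
    and d_12_15: "v12a \<noteq> v15a"
    and d_12_16: "v12a \<noteq> v16a"
    and d_12_17: "v12a \<noteq> v17a"
    and d_13_14: "v13a \<noteq> v14a"
    and d_13_15: "v13a \<noteq> v15a"
    and d_13_17: "v13a \<noteq> v17a"
    and d_13_18: "v13a \<noteq> v18a"
    and d_13_19: "v13a \<noteq> v19a"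
    and d_14_15: "v14a \<noteq> v15a"
    and d_14_16: "v14a \<noteq> v16a"
    and d_14_22: "v14a \<noteq> v22a"
    and d_14_23: "v14a \<noteq> v23a"
    and d_15_18: "v15a \<noteq> v18a"
    and d_15_19: "v15a \<noteq> v19a"
    and d_15_22: "v15a \<noteq> v22a"
    and d_15_23: "v15a \<noteq> v23a"
    and d_16_17: "v16a \<noteq> v17a"
    and d_16_20: "v16a \<noteq> v20a"
    and d_16_21: "v16a \<noteq> v21a"
    and d_17_21: "v17a \<noteq> v21a"
    and d_17_24: "v17a \<noteq> v24a"
    and d_18_19: "v18a \<noteq> v19a"
    and d_18_20: "v18a \<noteq> v20a"
    and d_18_21: "v18a \<noteq> v21a"
    and d_19_20: "v19a \<noteq> v20a"
    and d_19_22: "v19a \<noteq> v22a"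
    and d_19_24: "v19a \<noteq> v24a"
    and d_20_22: "v20a \<noteq> v22a"
    and d_20_24: "v20a \<noteq> v24a"
    and d_21_23: "v21a \<noteq> v23a"
    and d_22_23: "v22a \<noteq> v23a"
    and d_22_24: "v22a \<noteq> v24a"
    and d_23_24: "v23a \<noteq> v24a"
  shows False
proof -
  have "v1a = 3 \<or> v1a = 4" using lo1 hi1 d_0_1 c0 d_1_2 c1 by presburger
  then show False
  proof (elim disjE)
    assume h1: "v1a = 3"
    have h2: "v9a = 1" using lo9 hi9 d_1_9 h1 d_2_9 c1 d_6_9 c3 by presburger
    have h3: "v7a = 2" using lo7 hi7 d_5_7 c2 d_6_7 c3 d_7_9 h2 by presburger
    have h4: "v10a = 4" using lo10 hi10 d_1_10 h1 d_2_10 c1 d_9_10 h2 by presburger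
    have h5: "v11a = 3" using lo11 hi11 d_6_11 c3 d_7_11 h3 d_9_11 h2 d_10_11 h4 by presburger
    have "v3a = 1 \<or> v3a = 4" using lo3 hi3 d_1_3 h1 d_3_7 h3 by presburger
    then show False
    proof (elim disjE)
      assume h6: "v3a = 1"
      have h7: "v8a = 2" using lo8 hi8 d_3_8 h6 d_5_8 c2 d_8_10 h4 by presburger
      have h8: "v4a = 4" using lo4 hi4 d_0_4 c0 d_3_4 h6 d_4_8 h7 d_4_11 h5 by presburger
      have h9: "v12a = 3" using lo12 hi12 d_4_12 h8 d_8_12 h7 d_9_12 h2 by presburger
      have "v13a = 1 \<or> v13a = 2" using lo13 hi13 d_10_13 h4 d_11_13 h5 by presburger
      then show False
      proof (elim disjE)
        assume h10: "v13a = 1"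
        have h11: "v14a = 2" using lo14 hi14 d_10_14 h4 d_11_14 h5 d_13_14 h10 by presburger
        have h12: "v15a = 4" using lo15 hi15 d_12_15 h9 d_13_15 h10 d_14_15 h11 by presburger
        have "v16a = 1 \<or> v16a = 4" using lo16 hi16 d_12_16 h9 d_14_16 h11 by presburger
        then show False
        proof (elim disjE)
          assume h13: "v16a = 1"
          have "v17a = 2 \<or> v17a = 4" using lo17 hi17 d_12_17 h9 d_13_17 h10 d_16_17 h13 by presburger
          then show False
          proof (elim disjE)
            assume h14: "v17a = 2"
            have "v18a = 2 \<or> v18a = 3" using lo18 hi18 d_13_18 h10 d_15_18 h12 by presburger
            then show False
            proof (elim disjE)
              assume h15: "v18a = 2"
              have h16: "v19a = 3" using lo19 hi19 d_13_19 h10 d_15_19 h12 d_18_19 h15 by presburger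
              have h17: "v20a = 4" using lo20 hi20 d_16_20 h13 d_18_20 h15 d_19_20 h16 by presburger
              have h18: "v22a = 1" using lo22 hi22 d_14_22 h11 d_15_22 h12 d_19_22 h16 d_20_22 h17 by presburger
              show False using lo24 hi24 d_17_24 h14 d_19_24 h16 d_20_24 h17 d_22_24 h18 by presburger
            next
              assume h19: "v18a = 3"
              have h20: "v19a = 2" using lo19 hi19 d_13_19 h10 d_15_19 h12 d_18_19 h19 by presburger
              have h21: "v20a = 4" using lo20 hi20 d_16_20 h13 d_18_20 h19 d_19_20 h20 by presburger
              have h22: "v21a = 4" using lo21 hi21 d_16_21 h13 d_17_21 h14 d_18_21 h19 by presburger
              have "v22a = 1 \<or> v22a = 3" using lo22 hi22 d_14_22 h11 d_15_22 h12 d_19_22 h20 d_20_22 h21 by presburger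
              then show False
              proof (elim disjE)
                assume h23: "v22a = 1"
                have h24: "v23a = 3" using lo23 hi23 d_14_23 h11 d_15_23 h12 d_21_23 h22 d_22_23 h23 by presburger
                show False using lo24 hi24 d_17_24 h14 d_19_24 h20 d_20_24 h21 d_22_24 h23 d_23_24 h24 by presburger
              next
                assume h25: "v22a = 3"
                have h26: "v23a = 1" using lo23 hi23 d_14_23 h11 d_15_23 h12 d_21_23 h22 d_22_23 h25 by presburger
                show False using lo24 hi24 d_17_24 h14 d_19_24 h20 d_20_24 h21 d_22_24 h25 d_23_24 h26 by presburger
              qed
            qed
          next
            assume h27: "v17a = 4"
            have "v18a = 2 \<or> v18a = 3" using lo18 hi18 d_13_18 h10 d_15_18 h12 by presburger
            then show False
            proof (elim disjE)
              assume h28: "v18a = 2"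
              have h29: "v19a = 3" using lo19 hi19 d_13_19 h10 d_15_19 h12 d_18_19 h28 by presburger
              have h30: "v20a = 4" using lo20 hi20 d_16_20 h13 d_18_20 h28 d_19_20 h29 by presburger
              have h31: "v21a = 3" using lo21 hi21 d_16_21 h13 d_17_21 h27 d_18_21 h28 by presburger
              have h32: "v22a = 1" using lo22 hi22 d_14_22 h11 d_15_22 h12 d_19_22 h29 d_20_22 h30 by presburger
              show False using lo23 hi23 d_14_23 h11 d_15_23 h12 d_21_23 h31 d_22_23 h32 by presburger
            next
              assume h33: "v18a = 3"
              have h34: "v19a = 2" using lo19 hi19 d_13_19 h10 d_15_19 h12 d_18_19 h33 by presburger
              have h35: "v20a = 4" using lo20 hi20 d_16_20 h13 d_18_20 h33 d_19_20 h34 by presburger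
              have h36: "v21a = 2" using lo21 hi21 d_16_21 h13 d_17_21 h27 d_18_21 h33 by presburger
              have "v22a = 1 \<or> v22a = 3" using lo22 hi22 d_14_22 h11 d_15_22 h12 d_19_22 h34 d_20_22 h35 by presburger
              then show False
              proof (elim disjE)
                assume h37: "v22a = 1"
                have h38: "v23a = 3" using lo23 hi23 d_14_23 h11 d_15_23 h12 d_21_23 h36 d_22_23 h37 by presburger
                show False using lo24 hi24 d_17_24 h27 d_19_24 h34 d_20_24 h35 d_22_24 h37 d_23_24 h38 by presburger
              next
                assume h39: "v22a = 3"
                have h40: "v23a = 1" using lo23 hi23 d_14_23 h11 d_15_23 h12 d_21_23 h36 d_22_23 h39 by presburger
                show False using lo24 hi24 d_17_24 h27 d_19_24 h34 d_20_24 h35 d_22_24 h39 d_23_24 h40 by presburger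
              qed
            qed
          qed
        next
          assume h41: "v16a = 4"
          have h42: "v17a = 2" using lo17 hi17 d_12_17 h9 d_13_17 h10 d_16_17 h41 by presburger
          have "v18a = 2 \<or> v18a = 3" using lo18 hi18 d_13_18 h10 d_15_18 h12 by presburger
          then show False
          proof (elim disjE)
            assume h43: "v18a = 2"
            have h44: "v19a = 3" using lo19 hi19 d_13_19 h10 d_15_19 h12 d_18_19 h43 by presburger
            have h45: "v20a = 1" using lo20 hi20 d_16_20 h41 d_18_20 h43 d_19_20 h44 by presburger
            show False using lo22 hi22 d_14_22 h11 d_15_22 h12 d_19_22 h44 d_20_22 h45 by presburger
          next
            assume h46: "v18a = 3"
            have h47: "v19a = 2" using lo19 hi19 d_13_19 h10 d_15_19 h12 d_18_19 h46 by presburger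
            have h48: "v20a = 1" using lo20 hi20 d_16_20 h41 d_18_20 h46 d_19_20 h47 by presburger
            have h49: "v21a = 1" using lo21 hi21 d_16_21 h41 d_17_21 h42 d_18_21 h46 by presburger
            have h50: "v22a = 3" using lo22 hi22 d_14_22 h11 d_15_22 h12 d_19_22 h47 d_20_22 h48 by presburger
            show False using lo23 hi23 d_14_23 h11 d_15_23 h12 d_21_23 h49 d_22_23 h50 by presburger
          qed
        qed
      next
        assume h51: "v13a = 2"
        have h52: "v14a = 1" using lo14 hi14 d_10_14 h4 d_11_14 h5 d_13_14 h51 by presburger
        have h53: "v15a = 4" using lo15 hi15 d_12_15 h9 d_13_15 h51 d_14_15 h52 by presburger
        have "v16a = 2 \<or> v16a = 4" using lo16 hi16 d_12_16 h9 d_14_16 h52 by presburger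
        then show False
        proof (elim disjE)
          assume h54: "v16a = 2"
          have "v17a = 1 \<or> v17a = 4" using lo17 hi17 d_12_17 h9 d_13_17 h51 d_16_17 h54 by presburger
          then show False
          proof (elim disjE)
            assume h55: "v17a = 1"
            have "v18a = 1 \<or> v18a = 3" using lo18 hi18 d_13_18 h51 d_15_18 h53 by presburger
            then show False
            proof (elim disjE)
              assume h56: "v18a = 1"
              have h57: "v19a = 3" using lo19 hi19 d_13_19 h51 d_15_19 h53 d_18_19 h56 by presburger
              have h58: "v20a = 4" using lo20 hi20 d_16_20 h54 d_18_20 h56 d_19_20 h57 by presburger
              have h59: "v22a = 2" using lo22 hi22 d_14_22 h52 d_15_22 h53 d_19_22 h57 d_20_22 h58 by presburger
              show False using lo24 hi24 d_17_24 h55 d_19_24 h57 d_20_24 h58 d_22_24 h59 by presburger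
            next
              assume h60: "v18a = 3"
              have h61: "v19a = 1" using lo19 hi19 d_13_19 h51 d_15_19 h53 d_18_19 h60 by presburger
              have h62: "v20a = 4" using lo20 hi20 d_16_20 h54 d_18_20 h60 d_19_20 h61 by presburger
              have h63: "v21a = 4" using lo21 hi21 d_16_21 h54 d_17_21 h55 d_18_21 h60 by presburger
              have "v22a = 2 \<or> v22a = 3" using lo22 hi22 d_14_22 h52 d_15_22 h53 d_19_22 h61 d_20_22 h62 by presburger
              then show False
              proof (elim disjE)
                assume h64: "v22a = 2"
                have h65: "v23a = 3" using lo23 hi23 d_14_23 h52 d_15_23 h53 d_21_23 h63 d_22_23 h64 by presburger
                show False using lo24 hi24 d_17_24 h55 d_19_24 h61 d_20_24 h62 d_22_24 h64 d_23_24 h65 by presburger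
              next
                assume h66: "v22a = 3"
                have h67: "v23a = 2" using lo23 hi23 d_14_23 h52 d_15_23 h53 d_21_23 h63 d_22_23 h66 by presburger
                show False using lo24 hi24 d_17_24 h55 d_19_24 h61 d_20_24 h62 d_22_24 h66 d_23_24 h67 by presburger
              qed
            qed
          next
            assume h68: "v17a = 4"
            have "v18a = 1 \<or> v18a = 3" using lo18 hi18 d_13_18 h51 d_15_18 h53 by presburger
            then show False
            proof (elim disjE)
              assume h69: "v18a = 1"
              have h70: "v19a = 3" using lo19 hi19 d_13_19 h51 d_15_19 h53 d_18_19 h69 by presburger
              have h71: "v20a = 4" using lo20 hi20 d_16_20 h54 d_18_20 h69 d_19_20 h70 by presburger
              have h72: "v21a = 3" using lo21 hi21 d_16_21 h54 d_17_21 h68 d_18_21 h69 by presburger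
              have h73: "v22a = 2" using lo22 hi22 d_14_22 h52 d_15_22 h53 d_19_22 h70 d_20_22 h71 by presburger
              show False using lo23 hi23 d_14_23 h52 d_15_23 h53 d_21_23 h72 d_22_23 h73 by presburger
            next
              assume h74: "v18a = 3"
              have h75: "v19a = 1" using lo19 hi19 d_13_19 h51 d_15_19 h53 d_18_19 h74 by presburger
              have h76: "v20a = 4" using lo20 hi20 d_16_20 h54 d_18_20 h74 d_19_20 h75 by presburger
              have h77: "v21a = 1" using lo21 hi21 d_16_21 h54 d_17_21 h68 d_18_21 h74 by presburger
              have "v22a = 2 \<or> v22a = 3" using lo22 hi22 d_14_22 h52 d_15_22 h53 d_19_22 h75 d_20_22 h76 by presburger
              then show False
              proof (elim disjE)
                assume h78: "v22a = 2"
                have h79: "v23a = 3" using lo23 hi23 d_14_23 h52 d_15_23 h53 d_21_23 h77 d_22_23 h78 by presburger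
                show False using lo24 hi24 d_17_24 h68 d_19_24 h75 d_20_24 h76 d_22_24 h78 d_23_24 h79 by presburger
              next
                assume h80: "v22a = 3"
                have h81: "v23a = 2" using lo23 hi23 d_14_23 h52 d_15_23 h53 d_21_23 h77 d_22_23 h80 by presburger
                show False using lo24 hi24 d_17_24 h68 d_19_24 h75 d_20_24 h76 d_22_24 h80 d_23_24 h81 by presburger
              qed
            qed
          qed
        next
          assume h82: "v16a = 4"
          have h83: "v17a = 1" using lo17 hi17 d_12_17 h9 d_13_17 h51 d_16_17 h82 by presburger
          have "v18a = 1 \<or> v18a = 3" using lo18 hi18 d_13_18 h51 d_15_18 h53 by presburger
          then show False
          proof (elim disjE)
            assume h84: "v18a = 1"
            have h85: "v19a = 3" using lo19 hi19 d_13_19 h51 d_15_19 h53 d_18_19 h84 by presburger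
            have h86: "v20a = 2" using lo20 hi20 d_16_20 h82 d_18_20 h84 d_19_20 h85 by presburger
            show False using lo22 hi22 d_14_22 h52 d_15_22 h53 d_19_22 h85 d_20_22 h86 by presburger
          next
            assume h87: "v18a = 3"
            have h88: "v19a = 1" using lo19 hi19 d_13_19 h51 d_15_19 h53 d_18_19 h87 by presburger
            have h89: "v20a = 2" using lo20 hi20 d_16_20 h82 d_18_20 h87 d_19_20 h88 by presburger
            have h90: "v21a = 2" using lo21 hi21 d_16_21 h82 d_17_21 h83 d_18_21 h87 by presburger
            have h91: "v22a = 3" using lo22 hi22 d_14_22 h52 d_15_22 h53 d_19_22 h88 d_20_22 h89 by presburger
            show False using lo23 hi23 d_14_23 h52 d_15_23 h53 d_21_23 h90 d_22_23 h91 by presburger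
          qed
        qed
      qed
    next
      assume h92: "v3a = 4"
      have h93: "v4a = 2" using lo4 hi4 d_0_4 c0 d_3_4 h92 d_4_11 h5 by presburger
      have h94: "v8a = 1" using lo8 hi8 d_3_8 h92 d_4_8 h93 d_5_8 c2 d_8_10 h4 by presburger
      have "v12a = 3 \<or> v12a = 4" using lo12 hi12 d_4_12 h93 d_8_12 h94 d_9_12 h2 by presburger
      then show False
      proof (elim disjE)
        assume h95: "v12a = 3"
        have "v13a = 1 \<or> v13a = 2" using lo13 hi13 d_10_13 h4 d_11_13 h5 by presburger
        then show False
        proof (elim disjE)
          assume h96: "v13a = 1"
          have h97: "v14a = 2" using lo14 hi14 d_10_14 h4 d_11_14 h5 d_13_14 h96 by presburger
          have h98: "v15a = 4" using lo15 hi15 d_12_15 h95 d_13_15 h96 d_14_15 h97 by presburger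
          have "v16a = 1 \<or> v16a = 4" using lo16 hi16 d_12_16 h95 d_14_16 h97 by presburger
          then show False
          proof (elim disjE)
            assume h99: "v16a = 1"
            have "v17a = 2 \<or> v17a = 4" using lo17 hi17 d_12_17 h95 d_13_17 h96 d_16_17 h99 by presburger
            then show False
            proof (elim disjE)
              assume h100: "v17a = 2"
              have "v18a = 2 \<or> v18a = 3" using lo18 hi18 d_13_18 h96 d_15_18 h98 by presburger
              then show False
              proof (elim disjE)
                assume h101: "v18a = 2"
                have h102: "v19a = 3" using lo19 hi19 d_13_19 h96 d_15_19 h98 d_18_19 h101 by presburger
                have h103: "v20a = 4" using lo20 hi20 d_16_20 h99 d_18_20 h101 d_19_20 h102 by presburger
                have h104: "v22a = 1" using lo22 hi22 d_14_22 h97 d_15_22 h98 d_19_22 h102 d_20_22 h103 by presburger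
                show False using lo24 hi24 d_17_24 h100 d_19_24 h102 d_20_24 h103 d_22_24 h104 by presburger
              next
                assume h105: "v18a = 3"
                have h106: "v19a = 2" using lo19 hi19 d_13_19 h96 d_15_19 h98 d_18_19 h105 by presburger
                have h107: "v20a = 4" using lo20 hi20 d_16_20 h99 d_18_20 h105 d_19_20 h106 by presburger
                have h108: "v21a = 4" using lo21 hi21 d_16_21 h99 d_17_21 h100 d_18_21 h105 by presburger
                have "v22a = 1 \<or> v22a = 3" using lo22 hi22 d_14_22 h97 d_15_22 h98 d_19_22 h106 d_20_22 h107 by presburger
                then show False
                proof (elim disjE)
                  assume h109: "v22a = 1"
                  have h110: "v23a = 3" using lo23 hi23 d_14_23 h97 d_15_23 h98 d_21_23 h108 d_22_23 h109 by presburger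
                  show False using lo24 hi24 d_17_24 h100 d_19_24 h106 d_20_24 h107 d_22_24 h109 d_23_24 h110 by presburger
                next
                  assume h111: "v22a = 3"
                  have h112: "v23a = 1" using lo23 hi23 d_14_23 h97 d_15_23 h98 d_21_23 h108 d_22_23 h111 by presburger
                  show False using lo24 hi24 d_17_24 h100 d_19_24 h106 d_20_24 h107 d_22_24 h111 d_23_24 h112 by presburger
                qed
              qed
            next
              assume h113: "v17a = 4"
              have "v18a = 2 \<or> v18a = 3" using lo18 hi18 d_13_18 h96 d_15_18 h98 by presburger
              then show False
              proof (elim disjE)
                assume h114: "v18a = 2"
                have h115: "v19a = 3" using lo19 hi19 d_13_19 h96 d_15_19 h98 d_18_19 h114 by presburger
                have h116: "v20a = 4" using lo20 hi20 d_16_20 h99 d_18_20 h114 d_19_20 h115 by presburger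
                have h117: "v21a = 3" using lo21 hi21 d_16_21 h99 d_17_21 h113 d_18_21 h114 by presburger
                have h118: "v22a = 1" using lo22 hi22 d_14_22 h97 d_15_22 h98 d_19_22 h115 d_20_22 h116 by presburger
                show False using lo23 hi23 d_14_23 h97 d_15_23 h98 d_21_23 h117 d_22_23 h118 by presburger
              next
                assume h119: "v18a = 3"
                have h120: "v19a = 2" using lo19 hi19 d_13_19 h96 d_15_19 h98 d_18_19 h119 by presburger
                have h121: "v20a = 4" using lo20 hi20 d_16_20 h99 d_18_20 h119 d_19_20 h120 by presburger
                have h122: "v21a = 2" using lo21 hi21 d_16_21 h99 d_17_21 h113 d_18_21 h119 by presburger
                have "v22a = 1 \<or> v22a = 3" using lo22 hi22 d_14_22 h97 d_15_22 h98 d_19_22 h120 d_20_22 h121 by presburger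
                then show False
                proof (elim disjE)
                  assume h123: "v22a = 1"
                  have h124: "v23a = 3" using lo23 hi23 d_14_23 h97 d_15_23 h98 d_21_23 h122 d_22_23 h123 by presburger
                  show False using lo24 hi24 d_17_24 h113 d_19_24 h120 d_20_24 h121 d_22_24 h123 d_23_24 h124 by presburger
                next
                  assume h125: "v22a = 3"
                  have h126: "v23a = 1" using lo23 hi23 d_14_23 h97 d_15_23 h98 d_21_23 h122 d_22_23 h125 by presburger
                  show False using lo24 hi24 d_17_24 h113 d_19_24 h120 d_20_24 h121 d_22_24 h125 d_23_24 h126 by presburger
                qed
              qed
            qed
          next
            assume h127: "v16a = 4"
            have h128: "v17a = 2" using lo17 hi17 d_12_17 h95 d_13_17 h96 d_16_17 h127 by presburger
            have "v18a = 2 \<or> v18a = 3" using lo18 hi18 d_13_18 h96 d_15_18 h98 by presburger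
            then show False
            proof (elim disjE)
              assume h129: "v18a = 2"
              have h130: "v19a = 3" using lo19 hi19 d_13_19 h96 d_15_19 h98 d_18_19 h129 by presburger
              have h131: "v20a = 1" using lo20 hi20 d_16_20 h127 d_18_20 h129 d_19_20 h130 by presburger
              show False using lo22 hi22 d_14_22 h97 d_15_22 h98 d_19_22 h130 d_20_22 h131 by presburger
            next
              assume h132: "v18a = 3"
              have h133: "v19a = 2" using lo19 hi19 d_13_19 h96 d_15_19 h98 d_18_19 h132 by presburger
              have h134: "v20a = 1" using lo20 hi20 d_16_20 h127 d_18_20 h132 d_19_20 h133 by presburger
              have h135: "v21a = 1" using lo21 hi21 d_16_21 h127 d_17_21 h128 d_18_21 h132 by presburger
              have h136: "v22a = 3" using lo22 hi22 d_14_22 h97 d_15_22 h98 d_19_22 h133 d_20_22 h134 by presburger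
              show False using lo23 hi23 d_14_23 h97 d_15_23 h98 d_21_23 h135 d_22_23 h136 by presburger
            qed
          qed
        next
          assume h137: "v13a = 2"
          have h138: "v14a = 1" using lo14 hi14 d_10_14 h4 d_11_14 h5 d_13_14 h137 by presburger
          have h139: "v15a = 4" using lo15 hi15 d_12_15 h95 d_13_15 h137 d_14_15 h138 by presburger
          have "v16a = 2 \<or> v16a = 4" using lo16 hi16 d_12_16 h95 d_14_16 h138 by presburger
          then show False
          proof (elim disjE)
            assume h140: "v16a = 2"
            have "v17a = 1 \<or> v17a = 4" using lo17 hi17 d_12_17 h95 d_13_17 h137 d_16_17 h140 by presburger
            then show False
            proof (elim disjE)
              assume h141: "v17a = 1"
              have "v18a = 1 \<or> v18a = 3" using lo18 hi18 d_13_18 h137 d_15_18 h139 by presburger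
              then show False
              proof (elim disjE)
                assume h142: "v18a = 1"
                have h143: "v19a = 3" using lo19 hi19 d_13_19 h137 d_15_19 h139 d_18_19 h142 by presburger
                have h144: "v20a = 4" using lo20 hi20 d_16_20 h140 d_18_20 h142 d_19_20 h143 by presburger
                have h145: "v22a = 2" using lo22 hi22 d_14_22 h138 d_15_22 h139 d_19_22 h143 d_20_22 h144 by presburger
                show False using lo24 hi24 d_17_24 h141 d_19_24 h143 d_20_24 h144 d_22_24 h145 by presburger
              next
                assume h146: "v18a = 3"
                have h147: "v19a = 1" using lo19 hi19 d_13_19 h137 d_15_19 h139 d_18_19 h146 by presburger
                have h148: "v20a = 4" using lo20 hi20 d_16_20 h140 d_18_20 h146 d_19_20 h147 by presburger
                have h149: "v21a = 4" using lo21 hi21 d_16_21 h140 d_17_21 h141 d_18_21 h146 by presburger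
                have "v22a = 2 \<or> v22a = 3" using lo22 hi22 d_14_22 h138 d_15_22 h139 d_19_22 h147 d_20_22 h148 by presburger
                then show False
                proof (elim disjE)
                  assume h150: "v22a = 2"
                  have h151: "v23a = 3" using lo23 hi23 d_14_23 h138 d_15_23 h139 d_21_23 h149 d_22_23 h150 by presburger
                  show False using lo24 hi24 d_17_24 h141 d_19_24 h147 d_20_24 h148 d_22_24 h150 d_23_24 h151 by presburger
                next
                  assume h152: "v22a = 3"
                  have h153: "v23a = 2" using lo23 hi23 d_14_23 h138 d_15_23 h139 d_21_23 h149 d_22_23 h152 by presburger
                  show False using lo24 hi24 d_17_24 h141 d_19_24 h147 d_20_24 h148 d_22_24 h152 d_23_24 h153 by presburger
                qed
              qed
            next
              assume h154: "v17a = 4"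
              have "v18a = 1 \<or> v18a = 3" using lo18 hi18 d_13_18 h137 d_15_18 h139 by presburger
              then show False
              proof (elim disjE)
                assume h155: "v18a = 1"
                have h156: "v19a = 3" using lo19 hi19 d_13_19 h137 d_15_19 h139 d_18_19 h155 by presburger
                have h157: "v20a = 4" using lo20 hi20 d_16_20 h140 d_18_20 h155 d_19_20 h156 by presburger
                have h158: "v21a = 3" using lo21 hi21 d_16_21 h140 d_17_21 h154 d_18_21 h155 by presburger
                have h159: "v22a = 2" using lo22 hi22 d_14_22 h138 d_15_22 h139 d_19_22 h156 d_20_22 h157 by presburger
                show False using lo23 hi23 d_14_23 h138 d_15_23 h139 d_21_23 h158 d_22_23 h159 by presburger
              next
                assume h160: "v18a = 3"
                have h161: "v19a = 1" using lo19 hi19 d_13_19 h137 d_15_19 h139 d_18_19 h160 by presburger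
                have h162: "v20a = 4" using lo20 hi20 d_16_20 h140 d_18_20 h160 d_19_20 h161 by presburger
                have h163: "v21a = 1" using lo21 hi21 d_16_21 h140 d_17_21 h154 d_18_21 h160 by presburger
                have "v22a = 2 \<or> v22a = 3" using lo22 hi22 d_14_22 h138 d_15_22 h139 d_19_22 h161 d_20_22 h162 by presburger
                then show False
                proof (elim disjE)
                  assume h164: "v22a = 2"
                  have h165: "v23a = 3" using lo23 hi23 d_14_23 h138 d_15_23 h139 d_21_23 h163 d_22_23 h164 by presburger
                  show False using lo24 hi24 d_17_24 h154 d_19_24 h161 d_20_24 h162 d_22_24 h164 d_23_24 h165 by presburger
                next
                  assume h166: "v22a = 3"
                  have h167: "v23a = 2" using lo23 hi23 d_14_23 h138 d_15_23 h139 d_21_23 h163 d_22_23 h166 by presburger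
                  show False using lo24 hi24 d_17_24 h154 d_19_24 h161 d_20_24 h162 d_22_24 h166 d_23_24 h167 by presburger
                qed
              qed
            qed
          next
            assume h168: "v16a = 4"
            have h169: "v17a = 1" using lo17 hi17 d_12_17 h95 d_13_17 h137 d_16_17 h168 by presburger
            have "v18a = 1 \<or> v18a = 3" using lo18 hi18 d_13_18 h137 d_15_18 h139 by presburger
            then show False
            proof (elim disjE)
              assume h170: "v18a = 1"
              have h171: "v19a = 3" using lo19 hi19 d_13_19 h137 d_15_19 h139 d_18_19 h170 by presburger
              have h172: "v20a = 2" using lo20 hi20 d_16_20 h168 d_18_20 h170 d_19_20 h171 by presburger
              show False using lo22 hi22 d_14_22 h138 d_15_22 h139 d_19_22 h171 d_20_22 h172 by presburger
            next
              assume h173: "v18a = 3"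
              have h174: "v19a = 1" using lo19 hi19 d_13_19 h137 d_15_19 h139 d_18_19 h173 by presburger
              have h175: "v20a = 2" using lo20 hi20 d_16_20 h168 d_18_20 h173 d_19_20 h174 by presburger
              have h176: "v21a = 2" using lo21 hi21 d_16_21 h168 d_17_21 h169 d_18_21 h173 by presburger
              have h177: "v22a = 3" using lo22 hi22 d_14_22 h138 d_15_22 h139 d_19_22 h174 d_20_22 h175 by presburger
              show False using lo23 hi23 d_14_23 h138 d_15_23 h139 d_21_23 h176 d_22_23 h177 by presburger
            qed
          qed
        qed
      next
        assume h178: "v12a = 4"
        have "v13a = 1 \<or> v13a = 2" using lo13 hi13 d_10_13 h4 d_11_13 h5 by presburger
        then show False
        proof (elim disjE)
          assume h179: "v13a = 1"
          have h180: "v14a = 2" using lo14 hi14 d_10_14 h4 d_11_14 h5 d_13_14 h179 by presburger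
          have h181: "v15a = 3" using lo15 hi15 d_12_15 h178 d_13_15 h179 d_14_15 h180 by presburger
          have "v16a = 1 \<or> v16a = 3" using lo16 hi16 d_12_16 h178 d_14_16 h180 by presburger
          then show False
          proof (elim disjE)
            assume h182: "v16a = 1"
            have "v17a = 2 \<or> v17a = 3" using lo17 hi17 d_12_17 h178 d_13_17 h179 d_16_17 h182 by presburger
            then show False
            proof (elim disjE)
              assume h183: "v17a = 2"
              have "v18a = 2 \<or> v18a = 4" using lo18 hi18 d_13_18 h179 d_15_18 h181 by presburger
              then show False
              proof (elim disjE)
                assume h184: "v18a = 2"
                have h185: "v19a = 4" using lo19 hi19 d_13_19 h179 d_15_19 h181 d_18_19 h184 by presburger
                have h186: "v20a = 3" using lo20 hi20 d_16_20 h182 d_18_20 h184 d_19_20 h185 by presburger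
                have h187: "v22a = 1" using lo22 hi22 d_14_22 h180 d_15_22 h181 d_19_22 h185 d_20_22 h186 by presburger
                show False using lo24 hi24 d_17_24 h183 d_19_24 h185 d_20_24 h186 d_22_24 h187 by presburger
              next
                assume h188: "v18a = 4"
                have h189: "v19a = 2" using lo19 hi19 d_13_19 h179 d_15_19 h181 d_18_19 h188 by presburger
                have h190: "v20a = 3" using lo20 hi20 d_16_20 h182 d_18_20 h188 d_19_20 h189 by presburger
                have h191: "v21a = 3" using lo21 hi21 d_16_21 h182 d_17_21 h183 d_18_21 h188 by presburger
                have "v22a = 1 \<or> v22a = 4" using lo22 hi22 d_14_22 h180 d_15_22 h181 d_19_22 h189 d_20_22 h190 by presburger
                then show False
                proof (elim disjE)
                  assume h192: "v22a = 1"
                  have h193: "v23a = 4" using lo23 hi23 d_14_23 h180 d_15_23 h181 d_21_23 h191 d_22_23 h192 by presburger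
                  show False using lo24 hi24 d_17_24 h183 d_19_24 h189 d_20_24 h190 d_22_24 h192 d_23_24 h193 by presburger
                next
                  assume h194: "v22a = 4"
                  have h195: "v23a = 1" using lo23 hi23 d_14_23 h180 d_15_23 h181 d_21_23 h191 d_22_23 h194 by presburger
                  show False using lo24 hi24 d_17_24 h183 d_19_24 h189 d_20_24 h190 d_22_24 h194 d_23_24 h195 by presburger
                qed
              qed
            next
              assume h196: "v17a = 3"
              have "v18a = 2 \<or> v18a = 4" using lo18 hi18 d_13_18 h179 d_15_18 h181 by presburger
              then show False
              proof (elim disjE)
                assume h197: "v18a = 2"
                have h198: "v19a = 4" using lo19 hi19 d_13_19 h179 d_15_19 h181 d_18_19 h197 by presburger
                have h199: "v20a = 3" using lo20 hi20 d_16_20 h182 d_18_20 h197 d_19_20 h198 by presburger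
                have h200: "v21a = 4" using lo21 hi21 d_16_21 h182 d_17_21 h196 d_18_21 h197 by presburger
                have h201: "v22a = 1" using lo22 hi22 d_14_22 h180 d_15_22 h181 d_19_22 h198 d_20_22 h199 by presburger
                show False using lo23 hi23 d_14_23 h180 d_15_23 h181 d_21_23 h200 d_22_23 h201 by presburger
              next
                assume h202: "v18a = 4"
                have h203: "v19a = 2" using lo19 hi19 d_13_19 h179 d_15_19 h181 d_18_19 h202 by presburger
                have h204: "v20a = 3" using lo20 hi20 d_16_20 h182 d_18_20 h202 d_19_20 h203 by presburger
                have h205: "v21a = 2" using lo21 hi21 d_16_21 h182 d_17_21 h196 d_18_21 h202 by presburger
                have "v22a = 1 \<or> v22a = 4" using lo22 hi22 d_14_22 h180 d_15_22 h181 d_19_22 h203 d_20_22 h204 by presburger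
                then show False
                proof (elim disjE)
                  assume h206: "v22a = 1"
                  have h207: "v23a = 4" using lo23 hi23 d_14_23 h180 d_15_23 h181 d_21_23 h205 d_22_23 h206 by presburger
                  show False using lo24 hi24 d_17_24 h196 d_19_24 h203 d_20_24 h204 d_22_24 h206 d_23_24 h207 by presburger
                next
                  assume h208: "v22a = 4"
                  have h209: "v23a = 1" using lo23 hi23 d_14_23 h180 d_15_23 h181 d_21_23 h205 d_22_23 h208 by presburger
                  show False using lo24 hi24 d_17_24 h196 d_19_24 h203 d_20_24 h204 d_22_24 h208 d_23_24 h209 by presburger
                qed
              qed
            qed
          next
            assume h210: "v16a = 3"
            have h211: "v17a = 2" using lo17 hi17 d_12_17 h178 d_13_17 h179 d_16_17 h210 by presburger
            have "v18a = 2 \<or> v18a = 4" using lo18 hi18 d_13_18 h179 d_15_18 h181 by presburger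
            then show False
            proof (elim disjE)
              assume h212: "v18a = 2"
              have h213: "v19a = 4" using lo19 hi19 d_13_19 h179 d_15_19 h181 d_18_19 h212 by presburger
              have h214: "v20a = 1" using lo20 hi20 d_16_20 h210 d_18_20 h212 d_19_20 h213 by presburger
              show False using lo22 hi22 d_14_22 h180 d_15_22 h181 d_19_22 h213 d_20_22 h214 by presburger
            next
              assume h215: "v18a = 4"
              have h216: "v19a = 2" using lo19 hi19 d_13_19 h179 d_15_19 h181 d_18_19 h215 by presburger
              have h217: "v20a = 1" using lo20 hi20 d_16_20 h210 d_18_20 h215 d_19_20 h216 by presburger
              have h218: "v21a = 1" using lo21 hi21 d_16_21 h210 d_17_21 h211 d_18_21 h215 by presburger
              have h219: "v22a = 4" using lo22 hi22 d_14_22 h180 d_15_22 h181 d_19_22 h216 d_20_22 h217 by presburger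
              show False using lo23 hi23 d_14_23 h180 d_15_23 h181 d_21_23 h218 d_22_23 h219 by presburger
            qed
          qed
        next
          assume h220: "v13a = 2"
          have h221: "v14a = 1" using lo14 hi14 d_10_14 h4 d_11_14 h5 d_13_14 h220 by presburger
          have h222: "v15a = 3" using lo15 hi15 d_12_15 h178 d_13_15 h220 d_14_15 h221 by presburger
          have "v16a = 2 \<or> v16a = 3" using lo16 hi16 d_12_16 h178 d_14_16 h221 by presburger
          then show False
          proof (elim disjE)
            assume h223: "v16a = 2"
            have "v17a = 1 \<or> v17a = 3" using lo17 hi17 d_12_17 h178 d_13_17 h220 d_16_17 h223 by presburger
            then show False
            proof (elim disjE)
              assume h224: "v17a = 1"
              have "v18a = 1 \<or> v18a = 4" using lo18 hi18 d_13_18 h220 d_15_18 h222 by presburger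
              then show False
              proof (elim disjE)
                assume h225: "v18a = 1"
                have h226: "v19a = 4" using lo19 hi19 d_13_19 h220 d_15_19 h222 d_18_19 h225 by presburger
                have h227: "v20a = 3" using lo20 hi20 d_16_20 h223 d_18_20 h225 d_19_20 h226 by presburger
                have h228: "v22a = 2" using lo22 hi22 d_14_22 h221 d_15_22 h222 d_19_22 h226 d_20_22 h227 by presburger
                show False using lo24 hi24 d_17_24 h224 d_19_24 h226 d_20_24 h227 d_22_24 h228 by presburger
              next
                assume h229: "v18a = 4"
                have h230: "v19a = 1" using lo19 hi19 d_13_19 h220 d_15_19 h222 d_18_19 h229 by presburger
                have h231: "v20a = 3" using lo20 hi20 d_16_20 h223 d_18_20 h229 d_19_20 h230 by presburger
                have h232: "v21a = 3" using lo21 hi21 d_16_21 h223 d_17_21 h224 d_18_21 h229 by presburger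
                have "v22a = 2 \<or> v22a = 4" using lo22 hi22 d_14_22 h221 d_15_22 h222 d_19_22 h230 d_20_22 h231 by presburger
                then show False
                proof (elim disjE)
                  assume h233: "v22a = 2"
                  have h234: "v23a = 4" using lo23 hi23 d_14_23 h221 d_15_23 h222 d_21_23 h232 d_22_23 h233 by presburger
                  show False using lo24 hi24 d_17_24 h224 d_19_24 h230 d_20_24 h231 d_22_24 h233 d_23_24 h234 by presburger
                next
                  assume h235: "v22a = 4"
                  have h236: "v23a = 2" using lo23 hi23 d_14_23 h221 d_15_23 h222 d_21_23 h232 d_22_23 h235 by presburger
                  show False using lo24 hi24 d_17_24 h224 d_19_24 h230 d_20_24 h231 d_22_24 h235 d_23_24 h236 by presburger
                qed
              qed
            next
              assume h237: "v17a = 3"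
              have "v18a = 1 \<or> v18a = 4" using lo18 hi18 d_13_18 h220 d_15_18 h222 by presburger
              then show False
              proof (elim disjE)
                assume h238: "v18a = 1"
                have h239: "v19a = 4" using lo19 hi19 d_13_19 h220 d_15_19 h222 d_18_19 h238 by presburger
                have h240: "v20a = 3" using lo20 hi20 d_16_20 h223 d_18_20 h238 d_19_20 h239 by presburger
                have h241: "v21a = 4" using lo21 hi21 d_16_21 h223 d_17_21 h237 d_18_21 h238 by presburger
                have h242: "v22a = 2" using lo22 hi22 d_14_22 h221 d_15_22 h222 d_19_22 h239 d_20_22 h240 by presburger
                show False using lo23 hi23 d_14_23 h221 d_15_23 h222 d_21_23 h241 d_22_23 h242 by presburger
              next
                assume h243: "v18a = 4"
                have h244: "v19a = 1" using lo19 hi19 d_13_19 h220 d_15_19 h222 d_18_19 h243 by presburger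
                have h245: "v20a = 3" using lo20 hi20 d_16_20 h223 d_18_20 h243 d_19_20 h244 by presburger
                have h246: "v21a = 1" using lo21 hi21 d_16_21 h223 d_17_21 h237 d_18_21 h243 by presburger
                have "v22a = 2 \<or> v22a = 4" using lo22 hi22 d_14_22 h221 d_15_22 h222 d_19_22 h244 d_20_22 h245 by presburger
                then show False
                proof (elim disjE)
                  assume h247: "v22a = 2"
                  have h248: "v23a = 4" using lo23 hi23 d_14_23 h221 d_15_23 h222 d_21_23 h246 d_22_23 h247 by presburger
                  show False using lo24 hi24 d_17_24 h237 d_19_24 h244 d_20_24 h245 d_22_24 h247 d_23_24 h248 by presburger
                next
                  assume h249: "v22a = 4"
                  have h250: "v23a = 2" using lo23 hi23 d_14_23 h221 d_15_23 h222 d_21_23 h246 d_22_23 h249 by presburger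
                  show False using lo24 hi24 d_17_24 h237 d_19_24 h244 d_20_24 h245 d_22_24 h249 d_23_24 h250 by presburger
                qed
              qed
            qed
          next
            assume h251: "v16a = 3"
            have h252: "v17a = 1" using lo17 hi17 d_12_17 h178 d_13_17 h220 d_16_17 h251 by presburger
            have "v18a = 1 \<or> v18a = 4" using lo18 hi18 d_13_18 h220 d_15_18 h222 by presburger
            then show False
            proof (elim disjE)
              assume h253: "v18a = 1"
              have h254: "v19a = 4" using lo19 hi19 d_13_19 h220 d_15_19 h222 d_18_19 h253 by presburger
              have h255: "v20a = 2" using lo20 hi20 d_16_20 h251 d_18_20 h253 d_19_20 h254 by presburger
              show False using lo22 hi22 d_14_22 h221 d_15_22 h222 d_19_22 h254 d_20_22 h255 by presburger
            next
              assume h256: "v18a = 4"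
              have h257: "v19a = 1" using lo19 hi19 d_13_19 h220 d_15_19 h222 d_18_19 h256 by presburger
              have h258: "v20a = 2" using lo20 hi20 d_16_20 h251 d_18_20 h256 d_19_20 h257 by presburger
              have h259: "v21a = 2" using lo21 hi21 d_16_21 h251 d_17_21 h252 d_18_21 h256 by presburger
              have h260: "v22a = 4" using lo22 hi22 d_14_22 h221 d_15_22 h222 d_19_22 h257 d_20_22 h258 by presburger
              show False using lo23 hi23 d_14_23 h221 d_15_23 h222 d_21_23 h259 d_22_23 h260 by presburger
            qed
          qed
        qed
      qed
    qed
  next
    assume h261: "v1a = 4"
    have "v7a = 1 \<or> v7a = 2" using lo7 hi7 d_5_7 c2 d_6_7 c3 by presburger
    then show False
    proof (elim disjE)
      assume h262: "v7a = 1"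
      have h263: "v9a = 3" using lo9 hi9 d_1_9 h261 d_2_9 c1 d_6_9 c3 d_7_9 h262 by presburger
      have h264: "v10a = 1" using lo10 hi10 d_1_10 h261 d_2_10 c1 d_9_10 h263 by presburger
      have h265: "v11a = 2" using lo11 hi11 d_6_11 c3 d_7_11 h262 d_9_11 h263 d_10_11 h264 by presburger
      have "v3a = 2 \<or> v3a = 3" using lo3 hi3 d_1_3 h261 d_3_7 h262 by presburger
      then show False
      proof (elim disjE)
        assume h266: "v3a = 2"
        have h267: "v8a = 4" using lo8 hi8 d_3_8 h266 d_5_8 c2 d_8_10 h264 by presburger
        have h268: "v4a = 3" using lo4 hi4 d_0_4 c0 d_3_4 h266 d_4_8 h267 d_4_11 h265 by presburger
        have "v12a = 1 \<or> v12a = 2" using lo12 hi12 d_4_12 h268 d_8_12 h267 d_9_12 h263 by presburger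
        then show False
        proof (elim disjE)
          assume h269: "v12a = 1"
          have "v13a = 3 \<or> v13a = 4" using lo13 hi13 d_10_13 h264 d_11_13 h265 by presburger
          then show False
          proof (elim disjE)
            assume h270: "v13a = 3"
            have h271: "v14a = 4" using lo14 hi14 d_10_14 h264 d_11_14 h265 d_13_14 h270 by presburger
            have h272: "v15a = 2" using lo15 hi15 d_12_15 h269 d_13_15 h270 d_14_15 h271 by presburger
            have "v16a = 2 \<or> v16a = 3" using lo16 hi16 d_12_16 h269 d_14_16 h271 by presburger
            then show False
            proof (elim disjE)
              assume h273: "v16a = 2"
              have h274: "v17a = 4" using lo17 hi17 d_12_17 h269 d_13_17 h270 d_16_17 h273 by presburger
              have "v18a = 1 \<or> v18a = 4" using lo18 hi18 d_13_18 h270 d_15_18 h272 by presburger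
              then show False
              proof (elim disjE)
                assume h275: "v18a = 1"
                have h276: "v19a = 4" using lo19 hi19 d_13_19 h270 d_15_19 h272 d_18_19 h275 by presburger
                have h277: "v20a = 3" using lo20 hi20 d_16_20 h273 d_18_20 h275 d_19_20 h276 by presburger
                have h278: "v21a = 3" using lo21 hi21 d_16_21 h273 d_17_21 h274 d_18_21 h275 by presburger
                have h279: "v22a = 1" using lo22 hi22 d_14_22 h271 d_15_22 h272 d_19_22 h276 d_20_22 h277 by presburger
                show False using lo23 hi23 d_14_23 h271 d_15_23 h272 d_21_23 h278 d_22_23 h279 by presburger
              next
                assume h280: "v18a = 4"
                have h281: "v19a = 1" using lo19 hi19 d_13_19 h270 d_15_19 h272 d_18_19 h280 by presburger
                have h282: "v20a = 3" using lo20 hi20 d_16_20 h273 d_18_20 h280 d_19_20 h281 by presburger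
                show False using lo22 hi22 d_14_22 h271 d_15_22 h272 d_19_22 h281 d_20_22 h282 by presburger
              qed
            next
              assume h283: "v16a = 3"
              have "v17a = 2 \<or> v17a = 4" using lo17 hi17 d_12_17 h269 d_13_17 h270 d_16_17 h283 by presburger
              then show False
              proof (elim disjE)
                assume h284: "v17a = 2"
                have "v18a = 1 \<or> v18a = 4" using lo18 hi18 d_13_18 h270 d_15_18 h272 by presburger
                then show False
                proof (elim disjE)
                  assume h285: "v18a = 1"
                  have h286: "v19a = 4" using lo19 hi19 d_13_19 h270 d_15_19 h272 d_18_19 h285 by presburger
                  have h287: "v20a = 2" using lo20 hi20 d_16_20 h283 d_18_20 h285 d_19_20 h286 by presburger
                  have h288: "v21a = 4" using lo21 hi21 d_16_21 h283 d_17_21 h284 d_18_21 h285 by presburger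
                  have "v22a = 1 \<or> v22a = 3" using lo22 hi22 d_14_22 h271 d_15_22 h272 d_19_22 h286 d_20_22 h287 by presburger
                  then show False
                  proof (elim disjE)
                    assume h289: "v22a = 1"
                    have h290: "v23a = 3" using lo23 hi23 d_14_23 h271 d_15_23 h272 d_21_23 h288 d_22_23 h289 by presburger
                    show False using lo24 hi24 d_17_24 h284 d_19_24 h286 d_20_24 h287 d_22_24 h289 d_23_24 h290 by presburger
                  next
                    assume h291: "v22a = 3"
                    have h292: "v23a = 1" using lo23 hi23 d_14_23 h271 d_15_23 h272 d_21_23 h288 d_22_23 h291 by presburger
                    show False using lo24 hi24 d_17_24 h284 d_19_24 h286 d_20_24 h287 d_22_24 h291 d_23_24 h292 by presburger
                  qed
                next
                  assume h293: "v18a = 4"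
                  have h294: "v19a = 1" using lo19 hi19 d_13_19 h270 d_15_19 h272 d_18_19 h293 by presburger
                  have h295: "v20a = 2" using lo20 hi20 d_16_20 h283 d_18_20 h293 d_19_20 h294 by presburger
                  have h296: "v21a = 1" using lo21 hi21 d_16_21 h283 d_17_21 h284 d_18_21 h293 by presburger
                  have h297: "v22a = 3" using lo22 hi22 d_14_22 h271 d_15_22 h272 d_19_22 h294 d_20_22 h295 by presburger
                  show False using lo23 hi23 d_14_23 h271 d_15_23 h272 d_21_23 h296 d_22_23 h297 by presburger
                qed
              next
                assume h298: "v17a = 4"
                have "v18a = 1 \<or> v18a = 4" using lo18 hi18 d_13_18 h270 d_15_18 h272 by presburger
                then show False
                proof (elim disjE)
                  assume h299: "v18a = 1"
                  have h300: "v19a = 4" using lo19 hi19 d_13_19 h270 d_15_19 h272 d_18_19 h299 by presburger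
                  have h301: "v20a = 2" using lo20 hi20 d_16_20 h283 d_18_20 h299 d_19_20 h300 by presburger
                  have h302: "v21a = 2" using lo21 hi21 d_16_21 h283 d_17_21 h298 d_18_21 h299 by presburger
                  have "v22a = 1 \<or> v22a = 3" using lo22 hi22 d_14_22 h271 d_15_22 h272 d_19_22 h300 d_20_22 h301 by presburger
                  then show False
                  proof (elim disjE)
                    assume h303: "v22a = 1"
                    have h304: "v23a = 3" using lo23 hi23 d_14_23 h271 d_15_23 h272 d_21_23 h302 d_22_23 h303 by presburger
                    show False using lo24 hi24 d_17_24 h298 d_19_24 h300 d_20_24 h301 d_22_24 h303 d_23_24 h304 by presburger
                  next
                    assume h305: "v22a = 3"
                    have h306: "v23a = 1" using lo23 hi23 d_14_23 h271 d_15_23 h272 d_21_23 h302 d_22_23 h305 by presburger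
                    show False using lo24 hi24 d_17_24 h298 d_19_24 h300 d_20_24 h301 d_22_24 h305 d_23_24 h306 by presburger
                  qed
                next
                  assume h307: "v18a = 4"
                  have h308: "v19a = 1" using lo19 hi19 d_13_19 h270 d_15_19 h272 d_18_19 h307 by presburger
                  have h309: "v20a = 2" using lo20 hi20 d_16_20 h283 d_18_20 h307 d_19_20 h308 by presburger
                  have h310: "v22a = 3" using lo22 hi22 d_14_22 h271 d_15_22 h272 d_19_22 h308 d_20_22 h309 by presburger
                  show False using lo24 hi24 d_17_24 h298 d_19_24 h308 d_20_24 h309 d_22_24 h310 by presburger
                qed
              qed
            qed
          next
            assume h311: "v13a = 4"
            have h312: "v14a = 3" using lo14 hi14 d_10_14 h264 d_11_14 h265 d_13_14 h311 by presburger
            have h313: "v15a = 2" using lo15 hi15 d_12_15 h269 d_13_15 h311 d_14_15 h312 by presburger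
            have "v16a = 2 \<or> v16a = 4" using lo16 hi16 d_12_16 h269 d_14_16 h312 by presburger
            then show False
            proof (elim disjE)
              assume h314: "v16a = 2"
              have h315: "v17a = 3" using lo17 hi17 d_12_17 h269 d_13_17 h311 d_16_17 h314 by presburger
              have "v18a = 1 \<or> v18a = 3" using lo18 hi18 d_13_18 h311 d_15_18 h313 by presburger
              then show False
              proof (elim disjE)
                assume h316: "v18a = 1"
                have h317: "v19a = 3" using lo19 hi19 d_13_19 h311 d_15_19 h313 d_18_19 h316 by presburger
                have h318: "v20a = 4" using lo20 hi20 d_16_20 h314 d_18_20 h316 d_19_20 h317 by presburger
                have h319: "v21a = 4" using lo21 hi21 d_16_21 h314 d_17_21 h315 d_18_21 h316 by presburger
                have h320: "v22a = 1" using lo22 hi22 d_14_22 h312 d_15_22 h313 d_19_22 h317 d_20_22 h318 by presburger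
                show False using lo23 hi23 d_14_23 h312 d_15_23 h313 d_21_23 h319 d_22_23 h320 by presburger
              next
                assume h321: "v18a = 3"
                have h322: "v19a = 1" using lo19 hi19 d_13_19 h311 d_15_19 h313 d_18_19 h321 by presburger
                have h323: "v20a = 4" using lo20 hi20 d_16_20 h314 d_18_20 h321 d_19_20 h322 by presburger
                show False using lo22 hi22 d_14_22 h312 d_15_22 h313 d_19_22 h322 d_20_22 h323 by presburger
              qed
            next
              assume h324: "v16a = 4"
              have "v17a = 2 \<or> v17a = 3" using lo17 hi17 d_12_17 h269 d_13_17 h311 d_16_17 h324 by presburger
              then show False
              proof (elim disjE)
                assume h325: "v17a = 2"
                have "v18a = 1 \<or> v18a = 3" using lo18 hi18 d_13_18 h311 d_15_18 h313 by presburger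
                then show False
                proof (elim disjE)
                  assume h326: "v18a = 1"
                  have h327: "v19a = 3" using lo19 hi19 d_13_19 h311 d_15_19 h313 d_18_19 h326 by presburger
                  have h328: "v20a = 2" using lo20 hi20 d_16_20 h324 d_18_20 h326 d_19_20 h327 by presburger
                  have h329: "v21a = 3" using lo21 hi21 d_16_21 h324 d_17_21 h325 d_18_21 h326 by presburger
                  have "v22a = 1 \<or> v22a = 4" using lo22 hi22 d_14_22 h312 d_15_22 h313 d_19_22 h327 d_20_22 h328 by presburger
                  then show False
                  proof (elim disjE)
                    assume h330: "v22a = 1"
                    have h331: "v23a = 4" using lo23 hi23 d_14_23 h312 d_15_23 h313 d_21_23 h329 d_22_23 h330 by presburger
                    show False using lo24 hi24 d_17_24 h325 d_19_24 h327 d_20_24 h328 d_22_24 h330 d_23_24 h331 by presburger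
                  next
                    assume h332: "v22a = 4"
                    have h333: "v23a = 1" using lo23 hi23 d_14_23 h312 d_15_23 h313 d_21_23 h329 d_22_23 h332 by presburger
                    show False using lo24 hi24 d_17_24 h325 d_19_24 h327 d_20_24 h328 d_22_24 h332 d_23_24 h333 by presburger
                  qed
                next
                  assume h334: "v18a = 3"
                  have h335: "v19a = 1" using lo19 hi19 d_13_19 h311 d_15_19 h313 d_18_19 h334 by presburger
                  have h336: "v20a = 2" using lo20 hi20 d_16_20 h324 d_18_20 h334 d_19_20 h335 by presburger
                  have h337: "v21a = 1" using lo21 hi21 d_16_21 h324 d_17_21 h325 d_18_21 h334 by presburger
                  have h338: "v22a = 4" using lo22 hi22 d_14_22 h312 d_15_22 h313 d_19_22 h335 d_20_22 h336 by presburger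
                  show False using lo23 hi23 d_14_23 h312 d_15_23 h313 d_21_23 h337 d_22_23 h338 by presburger
                qed
              next
                assume h339: "v17a = 3"
                have "v18a = 1 \<or> v18a = 3" using lo18 hi18 d_13_18 h311 d_15_18 h313 by presburger
                then show False
                proof (elim disjE)
                  assume h340: "v18a = 1"
                  have h341: "v19a = 3" using lo19 hi19 d_13_19 h311 d_15_19 h313 d_18_19 h340 by presburger
                  have h342: "v20a = 2" using lo20 hi20 d_16_20 h324 d_18_20 h340 d_19_20 h341 by presburger
                  have h343: "v21a = 2" using lo21 hi21 d_16_21 h324 d_17_21 h339 d_18_21 h340 by presburger
                  have "v22a = 1 \<or> v22a = 4" using lo22 hi22 d_14_22 h312 d_15_22 h313 d_19_22 h341 d_20_22 h342 by presburger
                  then show False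
                  proof (elim disjE)
                    assume h344: "v22a = 1"
                    have h345: "v23a = 4" using lo23 hi23 d_14_23 h312 d_15_23 h313 d_21_23 h343 d_22_23 h344 by presburger
                    show False using lo24 hi24 d_17_24 h339 d_19_24 h341 d_20_24 h342 d_22_24 h344 d_23_24 h345 by presburger
                  next
                    assume h346: "v22a = 4"
                    have h347: "v23a = 1" using lo23 hi23 d_14_23 h312 d_15_23 h313 d_21_23 h343 d_22_23 h346 by presburger
                    show False using lo24 hi24 d_17_24 h339 d_19_24 h341 d_20_24 h342 d_22_24 h346 d_23_24 h347 by presburger
                  qed
                next
                  assume h348: "v18a = 3"
                  have h349: "v19a = 1" using lo19 hi19 d_13_19 h311 d_15_19 h313 d_18_19 h348 by presburger
                  have h350: "v20a = 2" using lo20 hi20 d_16_20 h324 d_18_20 h348 d_19_20 h349 by presburger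
                  have h351: "v22a = 4" using lo22 hi22 d_14_22 h312 d_15_22 h313 d_19_22 h349 d_20_22 h350 by presburger
                  show False using lo24 hi24 d_17_24 h339 d_19_24 h349 d_20_24 h350 d_22_24 h351 by presburger
                qed
              qed
            qed
          qed
        next
          assume h352: "v12a = 2"
          have "v13a = 3 \<or> v13a = 4" using lo13 hi13 d_10_13 h264 d_11_13 h265 by presburger
          then show False
          proof (elim disjE)
            assume h353: "v13a = 3"
            have h354: "v14a = 4" using lo14 hi14 d_10_14 h264 d_11_14 h265 d_13_14 h353 by presburger
            have h355: "v15a = 1" using lo15 hi15 d_12_15 h352 d_13_15 h353 d_14_15 h354 by presburger
            have "v16a = 1 \<or> v16a = 3" using lo16 hi16 d_12_16 h352 d_14_16 h354 by presburger
            then show False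
            proof (elim disjE)
              assume h356: "v16a = 1"
              have h357: "v17a = 4" using lo17 hi17 d_12_17 h352 d_13_17 h353 d_16_17 h356 by presburger
              have "v18a = 2 \<or> v18a = 4" using lo18 hi18 d_13_18 h353 d_15_18 h355 by presburger
              then show False
              proof (elim disjE)
                assume h358: "v18a = 2"
                have h359: "v19a = 4" using lo19 hi19 d_13_19 h353 d_15_19 h355 d_18_19 h358 by presburger
                have h360: "v20a = 3" using lo20 hi20 d_16_20 h356 d_18_20 h358 d_19_20 h359 by presburger
                have h361: "v21a = 3" using lo21 hi21 d_16_21 h356 d_17_21 h357 d_18_21 h358 by presburger
                have h362: "v22a = 2" using lo22 hi22 d_14_22 h354 d_15_22 h355 d_19_22 h359 d_20_22 h360 by presburger
                show False using lo23 hi23 d_14_23 h354 d_15_23 h355 d_21_23 h361 d_22_23 h362 by presburger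
              next
                assume h363: "v18a = 4"
                have h364: "v19a = 2" using lo19 hi19 d_13_19 h353 d_15_19 h355 d_18_19 h363 by presburger
                have h365: "v20a = 3" using lo20 hi20 d_16_20 h356 d_18_20 h363 d_19_20 h364 by presburger
                show False using lo22 hi22 d_14_22 h354 d_15_22 h355 d_19_22 h364 d_20_22 h365 by presburger
              qed
            next
              assume h366: "v16a = 3"
              have "v17a = 1 \<or> v17a = 4" using lo17 hi17 d_12_17 h352 d_13_17 h353 d_16_17 h366 by presburger
              then show False
              proof (elim disjE)
                assume h367: "v17a = 1"
                have "v18a = 2 \<or> v18a = 4" using lo18 hi18 d_13_18 h353 d_15_18 h355 by presburger
                then show False
                proof (elim disjE)
                  assume h368: "v18a = 2"
                  have h369: "v19a = 4" using lo19 hi19 d_13_19 h353 d_15_19 h355 d_18_19 h368 by presburger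
                  have h370: "v20a = 1" using lo20 hi20 d_16_20 h366 d_18_20 h368 d_19_20 h369 by presburger
                  have h371: "v21a = 4" using lo21 hi21 d_16_21 h366 d_17_21 h367 d_18_21 h368 by presburger
                  have "v22a = 2 \<or> v22a = 3" using lo22 hi22 d_14_22 h354 d_15_22 h355 d_19_22 h369 d_20_22 h370 by presburger
                  then show False
                  proof (elim disjE)
                    assume h372: "v22a = 2"
                    have h373: "v23a = 3" using lo23 hi23 d_14_23 h354 d_15_23 h355 d_21_23 h371 d_22_23 h372 by presburger
                    show False using lo24 hi24 d_17_24 h367 d_19_24 h369 d_20_24 h370 d_22_24 h372 d_23_24 h373 by presburger
                  next
                    assume h374: "v22a = 3"
                    have h375: "v23a = 2" using lo23 hi23 d_14_23 h354 d_15_23 h355 d_21_23 h371 d_22_23 h374 by presburger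
                    show False using lo24 hi24 d_17_24 h367 d_19_24 h369 d_20_24 h370 d_22_24 h374 d_23_24 h375 by presburger
                  qed
                next
                  assume h376: "v18a = 4"
                  have h377: "v19a = 2" using lo19 hi19 d_13_19 h353 d_15_19 h355 d_18_19 h376 by presburger
                  have h378: "v20a = 1" using lo20 hi20 d_16_20 h366 d_18_20 h376 d_19_20 h377 by presburger
                  have h379: "v21a = 2" using lo21 hi21 d_16_21 h366 d_17_21 h367 d_18_21 h376 by presburger
                  have h380: "v22a = 3" using lo22 hi22 d_14_22 h354 d_15_22 h355 d_19_22 h377 d_20_22 h378 by presburger
                  show False using lo23 hi23 d_14_23 h354 d_15_23 h355 d_21_23 h379 d_22_23 h380 by presburger
                qed
              next
                assume h381: "v17a = 4"
                have "v18a = 2 \<or> v18a = 4" using lo18 hi18 d_13_18 h353 d_15_18 h355 by presburger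
                then show False
                proof (elim disjE)
                  assume h382: "v18a = 2"
                  have h383: "v19a = 4" using lo19 hi19 d_13_19 h353 d_15_19 h355 d_18_19 h382 by presburger
                  have h384: "v20a = 1" using lo20 hi20 d_16_20 h366 d_18_20 h382 d_19_20 h383 by presburger
                  have h385: "v21a = 1" using lo21 hi21 d_16_21 h366 d_17_21 h381 d_18_21 h382 by presburger
                  have "v22a = 2 \<or> v22a = 3" using lo22 hi22 d_14_22 h354 d_15_22 h355 d_19_22 h383 d_20_22 h384 by presburger
                  then show False
                  proof (elim disjE)
                    assume h386: "v22a = 2"
                    have h387: "v23a = 3" using lo23 hi23 d_14_23 h354 d_15_23 h355 d_21_23 h385 d_22_23 h386 by presburger
                    show False using lo24 hi24 d_17_24 h381 d_19_24 h383 d_20_24 h384 d_22_24 h386 d_23_24 h387 by presburger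
                  next
                    assume h388: "v22a = 3"
                    have h389: "v23a = 2" using lo23 hi23 d_14_23 h354 d_15_23 h355 d_21_23 h385 d_22_23 h388 by presburger
                    show False using lo24 hi24 d_17_24 h381 d_19_24 h383 d_20_24 h384 d_22_24 h388 d_23_24 h389 by presburger
                  qed
                next
                  assume h390: "v18a = 4"
                  have h391: "v19a = 2" using lo19 hi19 d_13_19 h353 d_15_19 h355 d_18_19 h390 by presburger
                  have h392: "v20a = 1" using lo20 hi20 d_16_20 h366 d_18_20 h390 d_19_20 h391 by presburger
                  have h393: "v22a = 3" using lo22 hi22 d_14_22 h354 d_15_22 h355 d_19_22 h391 d_20_22 h392 by presburger
                  show False using lo24 hi24 d_17_24 h381 d_19_24 h391 d_20_24 h392 d_22_24 h393 by presburger
                qed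
              qed
            qed
          next
            assume h394: "v13a = 4"
            have h395: "v14a = 3" using lo14 hi14 d_10_14 h264 d_11_14 h265 d_13_14 h394 by presburger
            have h396: "v15a = 1" using lo15 hi15 d_12_15 h352 d_13_15 h394 d_14_15 h395 by presburger
            have "v16a = 1 \<or> v16a = 4" using lo16 hi16 d_12_16 h352 d_14_16 h395 by presburger
            then show False
            proof (elim disjE)
              assume h397: "v16a = 1"
              have h398: "v17a = 3" using lo17 hi17 d_12_17 h352 d_13_17 h394 d_16_17 h397 by presburger
              have "v18a = 2 \<or> v18a = 3" using lo18 hi18 d_13_18 h394 d_15_18 h396 by presburger
              then show False
              proof (elim disjE)
                assume h399: "v18a = 2"
                have h400: "v19a = 3" using lo19 hi19 d_13_19 h394 d_15_19 h396 d_18_19 h399 by presburger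
                have h401: "v20a = 4" using lo20 hi20 d_16_20 h397 d_18_20 h399 d_19_20 h400 by presburger
                have h402: "v21a = 4" using lo21 hi21 d_16_21 h397 d_17_21 h398 d_18_21 h399 by presburger
                have h403: "v22a = 2" using lo22 hi22 d_14_22 h395 d_15_22 h396 d_19_22 h400 d_20_22 h401 by presburger
                show False using lo23 hi23 d_14_23 h395 d_15_23 h396 d_21_23 h402 d_22_23 h403 by presburger
              next
                assume h404: "v18a = 3"
                have h405: "v19a = 2" using lo19 hi19 d_13_19 h394 d_15_19 h396 d_18_19 h404 by presburger
                have h406: "v20a = 4" using lo20 hi20 d_16_20 h397 d_18_20 h404 d_19_20 h405 by presburger
                show False using lo22 hi22 d_14_22 h395 d_15_22 h396 d_19_22 h405 d_20_22 h406 by presburger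
              qed
            next
              assume h407: "v16a = 4"
              have "v17a = 1 \<or> v17a = 3" using lo17 hi17 d_12_17 h352 d_13_17 h394 d_16_17 h407 by presburger
              then show False
              proof (elim disjE)
                assume h408: "v17a = 1"
                have "v18a = 2 \<or> v18a = 3" using lo18 hi18 d_13_18 h394 d_15_18 h396 by presburger
                then show False
                proof (elim disjE)
                  assume h409: "v18a = 2"
                  have h410: "v19a = 3" using lo19 hi19 d_13_19 h394 d_15_19 h396 d_18_19 h409 by presburger
                  have h411: "v20a = 1" using lo20 hi20 d_16_20 h407 d_18_20 h409 d_19_20 h410 by presburger
                  have h412: "v21a = 3" using lo21 hi21 d_16_21 h407 d_17_21 h408 d_18_21 h409 by presburger
                  have "v22a = 2 \<or> v22a = 4" using lo22 hi22 d_14_22 h395 d_15_22 h396 d_19_22 h410 d_20_22 h411 by presburger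
                  then show False
                  proof (elim disjE)
                    assume h413: "v22a = 2"
                    have h414: "v23a = 4" using lo23 hi23 d_14_23 h395 d_15_23 h396 d_21_23 h412 d_22_23 h413 by presburger
                    show False using lo24 hi24 d_17_24 h408 d_19_24 h410 d_20_24 h411 d_22_24 h413 d_23_24 h414 by presburger
                  next
                    assume h415: "v22a = 4"
                    have h416: "v23a = 2" using lo23 hi23 d_14_23 h395 d_15_23 h396 d_21_23 h412 d_22_23 h415 by presburger
                    show False using lo24 hi24 d_17_24 h408 d_19_24 h410 d_20_24 h411 d_22_24 h415 d_23_24 h416 by presburger
                  qed
                next
                  assume h417: "v18a = 3"
                  have h418: "v19a = 2" using lo19 hi19 d_13_19 h394 d_15_19 h396 d_18_19 h417 by presburger
                  have h419: "v20a = 1" using lo20 hi20 d_16_20 h407 d_18_20 h417 d_19_20 h418 by presburger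
                  have h420: "v21a = 2" using lo21 hi21 d_16_21 h407 d_17_21 h408 d_18_21 h417 by presburger
                  have h421: "v22a = 4" using lo22 hi22 d_14_22 h395 d_15_22 h396 d_19_22 h418 d_20_22 h419 by presburger
                  show False using lo23 hi23 d_14_23 h395 d_15_23 h396 d_21_23 h420 d_22_23 h421 by presburger
                qed
              next
                assume h422: "v17a = 3"
                have "v18a = 2 \<or> v18a = 3" using lo18 hi18 d_13_18 h394 d_15_18 h396 by presburger
                then show False
                proof (elim disjE)
                  assume h423: "v18a = 2"
                  have h424: "v19a = 3" using lo19 hi19 d_13_19 h394 d_15_19 h396 d_18_19 h423 by presburger
                  have h425: "v20a = 1" using lo20 hi20 d_16_20 h407 d_18_20 h423 d_19_20 h424 by presburger
                  have h426: "v21a = 1" using lo21 hi21 d_16_21 h407 d_17_21 h422 d_18_21 h423 by presburger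
                  have "v22a = 2 \<or> v22a = 4" using lo22 hi22 d_14_22 h395 d_15_22 h396 d_19_22 h424 d_20_22 h425 by presburger
                  then show False
                  proof (elim disjE)
                    assume h427: "v22a = 2"
                    have h428: "v23a = 4" using lo23 hi23 d_14_23 h395 d_15_23 h396 d_21_23 h426 d_22_23 h427 by presburger
                    show False using lo24 hi24 d_17_24 h422 d_19_24 h424 d_20_24 h425 d_22_24 h427 d_23_24 h428 by presburger
                  next
                    assume h429: "v22a = 4"
                    have h430: "v23a = 2" using lo23 hi23 d_14_23 h395 d_15_23 h396 d_21_23 h426 d_22_23 h429 by presburger
                    show False using lo24 hi24 d_17_24 h422 d_19_24 h424 d_20_24 h425 d_22_24 h429 d_23_24 h430 by presburger
                  qed
                next
                  assume h431: "v18a = 3"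
                  have h432: "v19a = 2" using lo19 hi19 d_13_19 h394 d_15_19 h396 d_18_19 h431 by presburger
                  have h433: "v20a = 1" using lo20 hi20 d_16_20 h407 d_18_20 h431 d_19_20 h432 by presburger
                  have h434: "v22a = 4" using lo22 hi22 d_14_22 h395 d_15_22 h396 d_19_22 h432 d_20_22 h433 by presburger
                  show False using lo24 hi24 d_17_24 h422 d_19_24 h432 d_20_24 h433 d_22_24 h434 by presburger
                qed
              qed
            qed
          qed
        qed
      next
        assume h435: "v3a = 3"
        have h436: "v4a = 4" using lo4 hi4 d_0_4 c0 d_3_4 h435 d_4_11 h265 by presburger
        have h437: "v8a = 2" using lo8 hi8 d_3_8 h435 d_4_8 h436 d_5_8 c2 d_8_10 h264 by presburger
        have h438: "v12a = 1" using lo12 hi12 d_4_12 h436 d_8_12 h437 d_9_12 h263 by presburger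
        have "v13a = 3 \<or> v13a = 4" using lo13 hi13 d_10_13 h264 d_11_13 h265 by presburger
        then show False
        proof (elim disjE)
          assume h439: "v13a = 3"
          have h440: "v14a = 4" using lo14 hi14 d_10_14 h264 d_11_14 h265 d_13_14 h439 by presburger
          have h441: "v15a = 2" using lo15 hi15 d_12_15 h438 d_13_15 h439 d_14_15 h440 by presburger
          have "v16a = 2 \<or> v16a = 3" using lo16 hi16 d_12_16 h438 d_14_16 h440 by presburger
          then show False
          proof (elim disjE)
            assume h442: "v16a = 2"
            have h443: "v17a = 4" using lo17 hi17 d_12_17 h438 d_13_17 h439 d_16_17 h442 by presburger
            have "v18a = 1 \<or> v18a = 4" using lo18 hi18 d_13_18 h439 d_15_18 h441 by presburger
            then show False
            proof (elim disjE)
              assume h444: "v18a = 1"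
              have h445: "v19a = 4" using lo19 hi19 d_13_19 h439 d_15_19 h441 d_18_19 h444 by presburger
              have h446: "v20a = 3" using lo20 hi20 d_16_20 h442 d_18_20 h444 d_19_20 h445 by presburger
              have h447: "v21a = 3" using lo21 hi21 d_16_21 h442 d_17_21 h443 d_18_21 h444 by presburger
              have h448: "v22a = 1" using lo22 hi22 d_14_22 h440 d_15_22 h441 d_19_22 h445 d_20_22 h446 by presburger
              show False using lo23 hi23 d_14_23 h440 d_15_23 h441 d_21_23 h447 d_22_23 h448 by presburger
            next
              assume h449: "v18a = 4"
              have h450: "v19a = 1" using lo19 hi19 d_13_19 h439 d_15_19 h441 d_18_19 h449 by presburger
              have h451: "v20a = 3" using lo20 hi20 d_16_20 h442 d_18_20 h449 d_19_20 h450 by presburger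
              show False using lo22 hi22 d_14_22 h440 d_15_22 h441 d_19_22 h450 d_20_22 h451 by presburger
            qed
          next
            assume h452: "v16a = 3"
            have "v17a = 2 \<or> v17a = 4" using lo17 hi17 d_12_17 h438 d_13_17 h439 d_16_17 h452 by presburger
            then show False
            proof (elim disjE)
              assume h453: "v17a = 2"
              have "v18a = 1 \<or> v18a = 4" using lo18 hi18 d_13_18 h439 d_15_18 h441 by presburger
              then show False
              proof (elim disjE)
                assume h454: "v18a = 1"
                have h455: "v19a = 4" using lo19 hi19 d_13_19 h439 d_15_19 h441 d_18_19 h454 by presburger
                have h456: "v20a = 2" using lo20 hi20 d_16_20 h452 d_18_20 h454 d_19_20 h455 by presburger
                have h457: "v21a = 4" using lo21 hi21 d_16_21 h452 d_17_21 h453 d_18_21 h454 by presburger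
                have "v22a = 1 \<or> v22a = 3" using lo22 hi22 d_14_22 h440 d_15_22 h441 d_19_22 h455 d_20_22 h456 by presburger
                then show False
                proof (elim disjE)
                  assume h458: "v22a = 1"
                  have h459: "v23a = 3" using lo23 hi23 d_14_23 h440 d_15_23 h441 d_21_23 h457 d_22_23 h458 by presburger
                  show False using lo24 hi24 d_17_24 h453 d_19_24 h455 d_20_24 h456 d_22_24 h458 d_23_24 h459 by presburger
                next
                  assume h460: "v22a = 3"
                  have h461: "v23a = 1" using lo23 hi23 d_14_23 h440 d_15_23 h441 d_21_23 h457 d_22_23 h460 by presburger
                  show False using lo24 hi24 d_17_24 h453 d_19_24 h455 d_20_24 h456 d_22_24 h460 d_23_24 h461 by presburger
                qed
              next
                assume h462: "v18a = 4"
                have h463: "v19a = 1" using lo19 hi19 d_13_19 h439 d_15_19 h441 d_18_19 h462 by presburger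
                have h464: "v20a = 2" using lo20 hi20 d_16_20 h452 d_18_20 h462 d_19_20 h463 by presburger
                have h465: "v21a = 1" using lo21 hi21 d_16_21 h452 d_17_21 h453 d_18_21 h462 by presburger
                have h466: "v22a = 3" using lo22 hi22 d_14_22 h440 d_15_22 h441 d_19_22 h463 d_20_22 h464 by presburger
                show False using lo23 hi23 d_14_23 h440 d_15_23 h441 d_21_23 h465 d_22_23 h466 by presburger
              qed
            next
              assume h467: "v17a = 4"
              have "v18a = 1 \<or> v18a = 4" using lo18 hi18 d_13_18 h439 d_15_18 h441 by presburger
              then show False
              proof (elim disjE)
                assume h468: "v18a = 1"
                have h469: "v19a = 4" using lo19 hi19 d_13_19 h439 d_15_19 h441 d_18_19 h468 by presburger
                have h470: "v20a = 2" using lo20 hi20 d_16_20 h452 d_18_20 h468 d_19_20 h469 by presburger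
                have h471: "v21a = 2" using lo21 hi21 d_16_21 h452 d_17_21 h467 d_18_21 h468 by presburger
                have "v22a = 1 \<or> v22a = 3" using lo22 hi22 d_14_22 h440 d_15_22 h441 d_19_22 h469 d_20_22 h470 by presburger
                then show False
                proof (elim disjE)
                  assume h472: "v22a = 1"
                  have h473: "v23a = 3" using lo23 hi23 d_14_23 h440 d_15_23 h441 d_21_23 h471 d_22_23 h472 by presburger
                  show False using lo24 hi24 d_17_24 h467 d_19_24 h469 d_20_24 h470 d_22_24 h472 d_23_24 h473 by presburger
                next
                  assume h474: "v22a = 3"
                  have h475: "v23a = 1" using lo23 hi23 d_14_23 h440 d_15_23 h441 d_21_23 h471 d_22_23 h474 by presburger
                  show False using lo24 hi24 d_17_24 h467 d_19_24 h469 d_20_24 h470 d_22_24 h474 d_23_24 h475 by presburger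
                qed
              next
                assume h476: "v18a = 4"
                have h477: "v19a = 1" using lo19 hi19 d_13_19 h439 d_15_19 h441 d_18_19 h476 by presburger
                have h478: "v20a = 2" using lo20 hi20 d_16_20 h452 d_18_20 h476 d_19_20 h477 by presburger
                have h479: "v22a = 3" using lo22 hi22 d_14_22 h440 d_15_22 h441 d_19_22 h477 d_20_22 h478 by presburger
                show False using lo24 hi24 d_17_24 h467 d_19_24 h477 d_20_24 h478 d_22_24 h479 by presburger
              qed
            qed
          qed
        next
          assume h480: "v13a = 4"
          have h481: "v14a = 3" using lo14 hi14 d_10_14 h264 d_11_14 h265 d_13_14 h480 by presburger
          have h482: "v15a = 2" using lo15 hi15 d_12_15 h438 d_13_15 h480 d_14_15 h481 by presburger
          have "v16a = 2 \<or> v16a = 4" using lo16 hi16 d_12_16 h438 d_14_16 h481 by presburger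
          then show False
          proof (elim disjE)
            assume h483: "v16a = 2"
            have h484: "v17a = 3" using lo17 hi17 d_12_17 h438 d_13_17 h480 d_16_17 h483 by presburger
            have "v18a = 1 \<or> v18a = 3" using lo18 hi18 d_13_18 h480 d_15_18 h482 by presburger
            then show False
            proof (elim disjE)
              assume h485: "v18a = 1"
              have h486: "v19a = 3" using lo19 hi19 d_13_19 h480 d_15_19 h482 d_18_19 h485 by presburger
              have h487: "v20a = 4" using lo20 hi20 d_16_20 h483 d_18_20 h485 d_19_20 h486 by presburger
              have h488: "v21a = 4" using lo21 hi21 d_16_21 h483 d_17_21 h484 d_18_21 h485 by presburger
              have h489: "v22a = 1" using lo22 hi22 d_14_22 h481 d_15_22 h482 d_19_22 h486 d_20_22 h487 by presburger
              show False using lo23 hi23 d_14_23 h481 d_15_23 h482 d_21_23 h488 d_22_23 h489 by presburger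
            next
              assume h490: "v18a = 3"
              have h491: "v19a = 1" using lo19 hi19 d_13_19 h480 d_15_19 h482 d_18_19 h490 by presburger
              have h492: "v20a = 4" using lo20 hi20 d_16_20 h483 d_18_20 h490 d_19_20 h491 by presburger
              show False using lo22 hi22 d_14_22 h481 d_15_22 h482 d_19_22 h491 d_20_22 h492 by presburger
            qed
          next
            assume h493: "v16a = 4"
            have "v17a = 2 \<or> v17a = 3" using lo17 hi17 d_12_17 h438 d_13_17 h480 d_16_17 h493 by presburger
            then show False
            proof (elim disjE)
              assume h494: "v17a = 2"
              have "v18a = 1 \<or> v18a = 3" using lo18 hi18 d_13_18 h480 d_15_18 h482 by presburger
              then show False
              proof (elim disjE)
                assume h495: "v18a = 1"
                have h496: "v19a = 3" using lo19 hi19 d_13_19 h480 d_15_19 h482 d_18_19 h495 by presburger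
                have h497: "v20a = 2" using lo20 hi20 d_16_20 h493 d_18_20 h495 d_19_20 h496 by presburger
                have h498: "v21a = 3" using lo21 hi21 d_16_21 h493 d_17_21 h494 d_18_21 h495 by presburger
                have "v22a = 1 \<or> v22a = 4" using lo22 hi22 d_14_22 h481 d_15_22 h482 d_19_22 h496 d_20_22 h497 by presburger
                then show False
                proof (elim disjE)
                  assume h499: "v22a = 1"
                  have h500: "v23a = 4" using lo23 hi23 d_14_23 h481 d_15_23 h482 d_21_23 h498 d_22_23 h499 by presburger
                  show False using lo24 hi24 d_17_24 h494 d_19_24 h496 d_20_24 h497 d_22_24 h499 d_23_24 h500 by presburger
                next
                  assume h501: "v22a = 4"
                  have h502: "v23a = 1" using lo23 hi23 d_14_23 h481 d_15_23 h482 d_21_23 h498 d_22_23 h501 by presburger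
                  show False using lo24 hi24 d_17_24 h494 d_19_24 h496 d_20_24 h497 d_22_24 h501 d_23_24 h502 by presburger
                qed
              next
                assume h503: "v18a = 3"
                have h504: "v19a = 1" using lo19 hi19 d_13_19 h480 d_15_19 h482 d_18_19 h503 by presburger
                have h505: "v20a = 2" using lo20 hi20 d_16_20 h493 d_18_20 h503 d_19_20 h504 by presburger
                have h506: "v21a = 1" using lo21 hi21 d_16_21 h493 d_17_21 h494 d_18_21 h503 by presburger
                have h507: "v22a = 4" using lo22 hi22 d_14_22 h481 d_15_22 h482 d_19_22 h504 d_20_22 h505 by presburger
                show False using lo23 hi23 d_14_23 h481 d_15_23 h482 d_21_23 h506 d_22_23 h507 by presburger
              qed
            next
              assume h508: "v17a = 3"
              have "v18a = 1 \<or> v18a = 3" using lo18 hi18 d_13_18 h480 d_15_18 h482 by presburger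
              then show False
              proof (elim disjE)
                assume h509: "v18a = 1"
                have h510: "v19a = 3" using lo19 hi19 d_13_19 h480 d_15_19 h482 d_18_19 h509 by presburger
                have h511: "v20a = 2" using lo20 hi20 d_16_20 h493 d_18_20 h509 d_19_20 h510 by presburger
                have h512: "v21a = 2" using lo21 hi21 d_16_21 h493 d_17_21 h508 d_18_21 h509 by presburger
                have "v22a = 1 \<or> v22a = 4" using lo22 hi22 d_14_22 h481 d_15_22 h482 d_19_22 h510 d_20_22 h511 by presburger
                then show False
                proof (elim disjE)
                  assume h513: "v22a = 1"
                  have h514: "v23a = 4" using lo23 hi23 d_14_23 h481 d_15_23 h482 d_21_23 h512 d_22_23 h513 by presburger
                  show False using lo24 hi24 d_17_24 h508 d_19_24 h510 d_20_24 h511 d_22_24 h513 d_23_24 h514 by presburger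
                next
                  assume h515: "v22a = 4"
                  have h516: "v23a = 1" using lo23 hi23 d_14_23 h481 d_15_23 h482 d_21_23 h512 d_22_23 h515 by presburger
                  show False using lo24 hi24 d_17_24 h508 d_19_24 h510 d_20_24 h511 d_22_24 h515 d_23_24 h516 by presburger
                qed
              next
                assume h517: "v18a = 3"
                have h518: "v19a = 1" using lo19 hi19 d_13_19 h480 d_15_19 h482 d_18_19 h517 by presburger
                have h519: "v20a = 2" using lo20 hi20 d_16_20 h493 d_18_20 h517 d_19_20 h518 by presburger
                have h520: "v22a = 4" using lo22 hi22 d_14_22 h481 d_15_22 h482 d_19_22 h518 d_20_22 h519 by presburger
                show False using lo24 hi24 d_17_24 h508 d_19_24 h518 d_20_24 h519 d_22_24 h520 by presburger
              qed
            qed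
          qed
        qed
      qed
    next
      assume h521: "v7a = 2"
      have "v3a = 1 \<or> v3a = 3" using lo3 hi3 d_1_3 h261 d_3_7 h521 by presburger
      then show False
      proof (elim disjE)
        assume h522: "v3a = 1"
        have "v8a = 2 \<or> v8a = 4" using lo8 hi8 d_3_8 h522 d_5_8 c2 by presburger
        then show False
        proof (elim disjE)
          assume h523: "v8a = 2"
          have "v4a = 3 \<or> v4a = 4" using lo4 hi4 d_0_4 c0 d_3_4 h522 d_4_8 h523 by presburger
          then show False
          proof (elim disjE)
            assume h524: "v4a = 3"
            have h525: "v11a = 1" using lo11 hi11 d_4_11 h524 d_6_11 c3 d_7_11 h521 by presburger
            have h526: "v9a = 3" using lo9 hi9 d_1_9 h261 d_2_9 c1 d_6_9 c3 d_7_9 h521 d_9_11 h525 by presburger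
            show False using lo10 hi10 d_1_10 h261 d_2_10 c1 d_8_10 h523 d_9_10 h526 d_10_11 h525 by presburger
          next
            assume h527: "v4a = 4"
            have "v9a = 1 \<or> v9a = 3" using lo9 hi9 d_1_9 h261 d_2_9 c1 d_6_9 c3 d_7_9 h521 by presburger
            then show False
            proof (elim disjE)
              assume h528: "v9a = 1"
              have h529: "v10a = 3" using lo10 hi10 d_1_10 h261 d_2_10 c1 d_8_10 h523 d_9_10 h528 by presburger
              show False using lo11 hi11 d_4_11 h527 d_6_11 c3 d_7_11 h521 d_9_11 h528 d_10_11 h529 by presburger
            next
              assume h530: "v9a = 3"
              have h531: "v10a = 1" using lo10 hi10 d_1_10 h261 d_2_10 c1 d_8_10 h523 d_9_10 h530 by presburger
              show False using lo11 hi11 d_4_11 h527 d_6_11 c3 d_7_11 h521 d_9_11 h530 d_10_11 h531 by presburger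
            qed
          qed
        next
          assume h532: "v8a = 4"
          have "v4a = 2 \<or> v4a = 3" using lo4 hi4 d_0_4 c0 d_3_4 h522 d_4_8 h532 by presburger
          then show False
          proof (elim disjE)
            assume h533: "v4a = 2"
            have "v9a = 1 \<or> v9a = 3" using lo9 hi9 d_1_9 h261 d_2_9 c1 d_6_9 c3 d_7_9 h521 by presburger
            then show False
            proof (elim disjE)
              assume h534: "v9a = 1"
              have h535: "v10a = 3" using lo10 hi10 d_1_10 h261 d_2_10 c1 d_8_10 h532 d_9_10 h534 by presburger
              show False using lo11 hi11 d_4_11 h533 d_6_11 c3 d_7_11 h521 d_9_11 h534 d_10_11 h535 by presburger
            next
              assume h536: "v9a = 3"
              have h537: "v10a = 1" using lo10 hi10 d_1_10 h261 d_2_10 c1 d_8_10 h532 d_9_10 h536 by presburger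
              show False using lo11 hi11 d_4_11 h533 d_6_11 c3 d_7_11 h521 d_9_11 h536 d_10_11 h537 by presburger
            qed
          next
            assume h538: "v4a = 3"
            have h539: "v11a = 1" using lo11 hi11 d_4_11 h538 d_6_11 c3 d_7_11 h521 by presburger
            have h540: "v9a = 3" using lo9 hi9 d_1_9 h261 d_2_9 c1 d_6_9 c3 d_7_9 h521 d_9_11 h539 by presburger
            show False using lo10 hi10 d_1_10 h261 d_2_10 c1 d_8_10 h532 d_9_10 h540 d_10_11 h539 by presburger
          qed
        qed
      next
        assume h541: "v3a = 3"
        have "v4a = 2 \<or> v4a = 4" using lo4 hi4 d_0_4 c0 d_3_4 h541 by presburger
        then show False
        proof (elim disjE)
          assume h542: "v4a = 2"
          have "v8a = 1 \<or> v8a = 4" using lo8 hi8 d_3_8 h541 d_4_8 h542 d_5_8 c2 by presburger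
          then show False
          proof (elim disjE)
            assume h543: "v8a = 1"
            have h544: "v10a = 3" using lo10 hi10 d_1_10 h261 d_2_10 c1 d_8_10 h543 by presburger
            have h545: "v9a = 1" using lo9 hi9 d_1_9 h261 d_2_9 c1 d_6_9 c3 d_7_9 h521 d_9_10 h544 by presburger
            show False using lo11 hi11 d_4_11 h542 d_6_11 c3 d_7_11 h521 d_9_11 h545 d_10_11 h544 by presburger
          next
            assume h546: "v8a = 4"
            have "v9a = 1 \<or> v9a = 3" using lo9 hi9 d_1_9 h261 d_2_9 c1 d_6_9 c3 d_7_9 h521 by presburger
            then show False
            proof (elim disjE)
              assume h547: "v9a = 1"
              have h548: "v10a = 3" using lo10 hi10 d_1_10 h261 d_2_10 c1 d_8_10 h546 d_9_10 h547 by presburger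
              show False using lo11 hi11 d_4_11 h542 d_6_11 c3 d_7_11 h521 d_9_11 h547 d_10_11 h548 by presburger
            next
              assume h549: "v9a = 3"
              have h550: "v10a = 1" using lo10 hi10 d_1_10 h261 d_2_10 c1 d_8_10 h546 d_9_10 h549 by presburger
              show False using lo11 hi11 d_4_11 h542 d_6_11 c3 d_7_11 h521 d_9_11 h549 d_10_11 h550 by presburger
            qed
          qed
        next
          assume h551: "v4a = 4"
          have "v8a = 1 \<or> v8a = 2" using lo8 hi8 d_3_8 h541 d_4_8 h551 d_5_8 c2 by presburger
          then show False
          proof (elim disjE)
            assume h552: "v8a = 1"
            have h553: "v10a = 3" using lo10 hi10 d_1_10 h261 d_2_10 c1 d_8_10 h552 by presburger
            have h554: "v9a = 1" using lo9 hi9 d_1_9 h261 d_2_9 c1 d_6_9 c3 d_7_9 h521 d_9_10 h553 by presburger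
            show False using lo11 hi11 d_4_11 h551 d_6_11 c3 d_7_11 h521 d_9_11 h554 d_10_11 h553 by presburger
          next
            assume h555: "v8a = 2"
            have "v9a = 1 \<or> v9a = 3" using lo9 hi9 d_1_9 h261 d_2_9 c1 d_6_9 c3 d_7_9 h521 by presburger
            then show False
            proof (elim disjE)
              assume h556: "v9a = 1"
              have h557: "v10a = 3" using lo10 hi10 d_1_10 h261 d_2_10 c1 d_8_10 h555 d_9_10 h556 by presburger
              show False using lo11 hi11 d_4_11 h551 d_6_11 c3 d_7_11 h521 d_9_11 h556 d_10_11 h557 by presburger
            next
              assume h558: "v9a = 3"
              have h559: "v10a = 1" using lo10 hi10 d_1_10 h261 d_2_10 c1 d_8_10 h555 d_9_10 h558 by presburger
              show False using lo11 hi11 d_4_11 h551 d_6_11 c3 d_7_11 h521 d_9_11 h558 d_10_11 h559 by presburger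
            qed
          qed
        qed
      qed
    qed
  qed
qed

lemma cover4: fixes a b c d x :: nat
  assumes "1 \<le> a" "a \<le> 4" "1 \<le> b" "b \<le> 4" "1 \<le> c" "c \<le> 4" "1 \<le> d" "d \<le> 4"
  "a \<noteq> b" "a \<noteq> c" "a \<noteq> d" "b \<noteq> c" "b \<noteq> d" "c \<noteq> d" "1 \<le> x" "x \<le> 4"
  shows "x = a \<or> x = b \<or> x = c \<or> x = d"
proof (rule ccontr)
  assume H: "\<not> (x = a \<or> x = b \<or> x = c \<or> x = d)"
  have "card {a,b,c,d,x} = 5" using H assms by (auto simp: card_insert_if)
  moreover have "card {a,b,c,d,x} \<le> card {1..(4::nat)}"
    by (rule card_mono) (use assms in auto)
  ultimately show False by simp
qed

lemma csp: fixes v0a v1a v2a v3a v4a v5a v6a v7a v8a v9a v10a v11a v12a v13a v14a v15a v16a v17a v18a v19a v20a v21a v22a v23a v24a :: nat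
  assumes lo0: "1 \<le> v0a" and hi0: "v0a \<le> 4"
    and lo1: "1 \<le> v1a" and hi1: "v1a \<le> 4"
    and lo2: "1 \<le> v2a" and hi2: "v2a \<le> 4"
    and lo3: "1 \<le> v3a" and hi3: "v3a \<le> 4"
    and lo4: "1 \<le> v4a" and hi4: "v4a \<le> 4"
    and lo5: "1 \<le> v5a" and hi5: "v5a \<le> 4"
    and lo6: "1 \<le> v6a" and hi6: "v6a \<le> 4"
    and lo7: "1 \<le> v7a" and hi7: "v7a \<le> 4"
    and lo8: "1 \<le> v8a" and hi8: "v8a \<le> 4"
    and lo9: "1 \<le> v9a" and hi9: "v9a \<le> 4"
    and lo10: "1 \<le> v10a" and hi10: "v10a \<le> 4"
    and lo11: "1 \<le> v11a" and hi11: "v11a \<le> 4"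
    and lo12: "1 \<le> v12a" and hi12: "v12a \<le> 4"
    and lo13: "1 \<le> v13a" and hi13: "v13a \<le> 4"
    and lo14: "1 \<le> v14a" and hi14: "v14a \<le> 4"
    and lo15: "1 \<le> v15a" and hi15: "v15a \<le> 4"
    and lo16: "1 \<le> v16a" and hi16: "v16a \<le> 4"
    and lo17: "1 \<le> v17a" and hi17: "v17a \<le> 4"
    and lo18: "1 \<le> v18a" and hi18: "v18a \<le> 4"
    and lo19: "1 \<le> v19a" and hi19: "v19a \<le> 4"
    and lo20: "1 \<le> v20a" and hi20: "v20a \<le> 4"
    and lo21: "1 \<le> v21a" and hi21: "v21a \<le> 4"
    and lo22: "1 \<le> v22a" and hi22: "v22a \<le> 4"
    and lo23: "1 \<le> v23a" and hi23: "v23a \<le> 4"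
    and lo24: "1 \<le> v24a" and hi24: "v24a \<le> 4"
    and d_0_1: "v0a \<noteq> v1a"
    and d_0_2: "v0a \<noteq> v2a"
    and d_0_4: "v0a \<noteq> v4a"
    and d_0_5: "v0a \<noteq> v5a"
    and d_0_6: "v0a \<noteq> v6a"
    and d_1_2: "v1a \<noteq> v2a"
    and d_1_3: "v1a \<noteq> v3a"
    and d_1_9: "v1a \<noteq> v9a"
    and d_1_10: "v1a \<noteq> v10a"
    and d_2_5: "v2a \<noteq> v5a"
    and d_2_6: "v2a \<noteq> v6a"
    and d_2_9: "v2a \<noteq> v9a"
    and d_2_10: "v2a \<noteq> v10a"
    and d_3_4: "v3a \<noteq> v4a"
    and d_3_7: "v3a \<noteq> v7a"
    and d_3_8: "v3a \<noteq> v8a"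
    and d_4_8: "v4a \<noteq> v8a"
    and d_4_11: "v4a \<noteq> v11a"
    and d_4_12: "v4a \<noteq> v12a"
    and d_5_6: "v5a \<noteq> v6a"
    and d_5_7: "v5a \<noteq> v7a"
    and d_5_8: "v5a \<noteq> v8a"
    and d_6_7: "v6a \<noteq> v7a"
    and d_6_9: "v6a \<noteq> v9a"
    and d_6_11: "v6a \<noteq> v11a"
    and d_7_9: "v7a \<noteq> v9a"
    and d_7_11: "v7a \<noteq> v11a"
    and d_8_10: "v8a \<noteq> v10a"
    and d_8_12: "v8a \<noteq> v12a"
    and d_9_10: "v9a \<noteq> v10a"
    and d_9_11: "v9a \<noteq> v11a"
    and d_9_12: "v9a \<noteq> v12a"
    and d_10_11: "v10a \<noteq> v11a"
    and d_10_13: "v10a \<noteq> v13a"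
    and d_10_14: "v10a \<noteq> v14a"
    and d_11_13: "v11a \<noteq> v13a"
    and d_11_14: "v11a \<noteq> v14a"
    and d_12_15: "v12a \<noteq> v15a"
    and d_12_16: "v12a \<noteq> v16a"
    and d_12_17: "v12a \<noteq> v17a"
    and d_13_14: "v13a \<noteq> v14a"
    and d_13_15: "v13a \<noteq> v15a"
    and d_13_17: "v13a \<noteq> v17a"
    and d_13_18: "v13a \<noteq> v18a"
    and d_13_19: "v13a \<noteq> v19a"
    and d_14_15: "v14a \<noteq> v15a"
    and d_14_16: "v14a \<noteq> v16a"
    and d_14_22: "v14a \<noteq> v22a"
    and d_14_23: "v14a \<noteq> v23a"
    and d_15_18: "v15a \<noteq> v18a"
    and d_15_19: "v15a \<noteq> v19a"
    and d_15_22: "v15a \<noteq> v22a"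
    and d_15_23: "v15a \<noteq> v23a"
    and d_16_17: "v16a \<noteq> v17a"
    and d_16_20: "v16a \<noteq> v20a"
    and d_16_21: "v16a \<noteq> v21a"
    and d_17_21: "v17a \<noteq> v21a"
    and d_17_24: "v17a \<noteq> v24a"
    and d_18_19: "v18a \<noteq> v19a"
    and d_18_20: "v18a \<noteq> v20a"
    and d_18_21: "v18a \<noteq> v21a"
    and d_19_20: "v19a \<noteq> v20a"
    and d_19_22: "v19a \<noteq> v22a"
    and d_19_24: "v19a \<noteq> v24a"
    and d_20_22: "v20a \<noteq> v22a"
    and d_20_24: "v20a \<noteq> v24a"
    and d_21_23: "v21a \<noteq> v23a"
    and d_22_23: "v22a \<noteq> v23a"
    and d_22_24: "v22a \<noteq> v24a"
    and d_23_24: "v23a \<noteq> v24a"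
  shows False
proof -
  define p where "p = (\<lambda>x::nat. if x = v0a then 1 else if x = v2a then 2 else if x = v5a then (3::nat) else 4)"
  have cov: "x = v0a \<or> x = v2a \<or> x = v5a \<or> x = v6a" if "1 \<le> x" "x \<le> 4" for x
    by (rule cover4[OF lo0 hi0 lo2 hi2 lo5 hi5 lo6 hi6 d_0_2 d_0_5 d_0_6 d_2_5 d_2_6 d_5_6 that])
  have pi: "p x \<noteq> p y" if "1 \<le> x" "x \<le> 4" "1 \<le> y" "y \<le> 4" "x \<noteq> y" for x y
    using cov[OF that(1,2)] cov[OF that(3,4)] that(5) d_0_2 d_0_5 d_0_6 d_2_5 d_2_6 d_5_6 unfolding p_def by (elim disjE; simp)
  have pr: "1 \<le> p x \<and> p x \<le> 4" for x unfolding p_def by simp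
  have pc: "p v0a = 1" "p v2a = 2" "p v5a = 3" "p v6a = 4" unfolding p_def using d_0_2 d_0_5 d_0_6 d_2_5 d_2_6 d_5_6 by auto
  have pp_0_1: "p v0a \<noteq> p v1a" by (rule pi[OF lo0 hi0 lo1 hi1 d_0_1])
  have pp_0_2: "p v0a \<noteq> p v2a" by (rule pi[OF lo0 hi0 lo2 hi2 d_0_2])
  have pp_0_4: "p v0a \<noteq> p v4a" by (rule pi[OF lo0 hi0 lo4 hi4 d_0_4])
  have pp_0_5: "p v0a \<noteq> p v5a" by (rule pi[OF lo0 hi0 lo5 hi5 d_0_5])
  have pp_0_6: "p v0a \<noteq> p v6a" by (rule pi[OF lo0 hi0 lo6 hi6 d_0_6])
  have pp_1_2: "p v1a \<noteq> p v2a" by (rule pi[OF lo1 hi1 lo2 hi2 d_1_2])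
  have pp_1_3: "p v1a \<noteq> p v3a" by (rule pi[OF lo1 hi1 lo3 hi3 d_1_3])
  have pp_1_9: "p v1a \<noteq> p v9a" by (rule pi[OF lo1 hi1 lo9 hi9 d_1_9])
  have pp_1_10: "p v1a \<noteq> p v10a" by (rule pi[OF lo1 hi1 lo10 hi10 d_1_10])
  have pp_2_5: "p v2a \<noteq> p v5a" by (rule pi[OF lo2 hi2 lo5 hi5 d_2_5])
  have pp_2_6: "p v2a \<noteq> p v6a" by (rule pi[OF lo2 hi2 lo6 hi6 d_2_6])
  have pp_2_9: "p v2a \<noteq> p v9a" by (rule pi[OF lo2 hi2 lo9 hi9 d_2_9])
  have pp_2_10: "p v2a \<noteq> p v10a" by (rule pi[OF lo2 hi2 lo10 hi10 d_2_10])
  have pp_3_4: "p v3a \<noteq> p v4a" by (rule pi[OF lo3 hi3 lo4 hi4 d_3_4])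
  have pp_3_7: "p v3a \<noteq> p v7a" by (rule pi[OF lo3 hi3 lo7 hi7 d_3_7])
  have pp_3_8: "p v3a \<noteq> p v8a" by (rule pi[OF lo3 hi3 lo8 hi8 d_3_8])
  have pp_4_8: "p v4a \<noteq> p v8a" by (rule pi[OF lo4 hi4 lo8 hi8 d_4_8])
  have pp_4_11: "p v4a \<noteq> p v11a" by (rule pi[OF lo4 hi4 lo11 hi11 d_4_11])
  have pp_4_12: "p v4a \<noteq> p v12a" by (rule pi[OF lo4 hi4 lo12 hi12 d_4_12])
  have pp_5_6: "p v5a \<noteq> p v6a" by (rule pi[OF lo5 hi5 lo6 hi6 d_5_6])
  have pp_5_7: "p v5a \<noteq> p v7a" by (rule pi[OF lo5 hi5 lo7 hi7 d_5_7])
  have pp_5_8: "p v5a \<noteq> p v8a" by (rule pi[OF lo5 hi5 lo8 hi8 d_5_8])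
  have pp_6_7: "p v6a \<noteq> p v7a" by (rule pi[OF lo6 hi6 lo7 hi7 d_6_7])
  have pp_6_9: "p v6a \<noteq> p v9a" by (rule pi[OF lo6 hi6 lo9 hi9 d_6_9])
  have pp_6_11: "p v6a \<noteq> p v11a" by (rule pi[OF lo6 hi6 lo11 hi11 d_6_11])
  have pp_7_9: "p v7a \<noteq> p v9a" by (rule pi[OF lo7 hi7 lo9 hi9 d_7_9])
  have pp_7_11: "p v7a \<noteq> p v11a" by (rule pi[OF lo7 hi7 lo11 hi11 d_7_11])
  have pp_8_10: "p v8a \<noteq> p v10a" by (rule pi[OF lo8 hi8 lo10 hi10 d_8_10])
  have pp_8_12: "p v8a \<noteq> p v12a" by (rule pi[OF lo8 hi8 lo12 hi12 d_8_12])
  have pp_9_10: "p v9a \<noteq> p v10a" by (rule pi[OF lo9 hi9 lo10 hi10 d_9_10])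
  have pp_9_11: "p v9a \<noteq> p v11a" by (rule pi[OF lo9 hi9 lo11 hi11 d_9_11])
  have pp_9_12: "p v9a \<noteq> p v12a" by (rule pi[OF lo9 hi9 lo12 hi12 d_9_12])
  have pp_10_11: "p v10a \<noteq> p v11a" by (rule pi[OF lo10 hi10 lo11 hi11 d_10_11])
  have pp_10_13: "p v10a \<noteq> p v13a" by (rule pi[OF lo10 hi10 lo13 hi13 d_10_13])
  have pp_10_14: "p v10a \<noteq> p v14a" by (rule pi[OF lo10 hi10 lo14 hi14 d_10_14])
  have pp_11_13: "p v11a \<noteq> p v13a" by (rule pi[OF lo11 hi11 lo13 hi13 d_11_13])
  have pp_11_14: "p v11a \<noteq> p v14a" by (rule pi[OF lo11 hi11 lo14 hi14 d_11_14])
  have pp_12_15: "p v12a \<noteq> p v15a" by (rule pi[OF lo12 hi12 lo15 hi15 d_12_15])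
  have pp_12_16: "p v12a \<noteq> p v16a" by (rule pi[OF lo12 hi12 lo16 hi16 d_12_16])
  have pp_12_17: "p v12a \<noteq> p v17a" by (rule pi[OF lo12 hi12 lo17 hi17 d_12_17])
  have pp_13_14: "p v13a \<noteq> p v14a" by (rule pi[OF lo13 hi13 lo14 hi14 d_13_14])
  have pp_13_15: "p v13a \<noteq> p v15a" by (rule pi[OF lo13 hi13 lo15 hi15 d_13_15])
  have pp_13_17: "p v13a \<noteq> p v17a" by (rule pi[OF lo13 hi13 lo17 hi17 d_13_17])
  have pp_13_18: "p v13a \<noteq> p v18a" by (rule pi[OF lo13 hi13 lo18 hi18 d_13_18])
  have pp_13_19: "p v13a \<noteq> p v19a" by (rule pi[OF lo13 hi13 lo19 hi19 d_13_19])
  have pp_14_15: "p v14a \<noteq> p v15a" by (rule pi[OF lo14 hi14 lo15 hi15 d_14_15])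
  have pp_14_16: "p v14a \<noteq> p v16a" by (rule pi[OF lo14 hi14 lo16 hi16 d_14_16])
  have pp_14_22: "p v14a \<noteq> p v22a" by (rule pi[OF lo14 hi14 lo22 hi22 d_14_22])
  have pp_14_23: "p v14a \<noteq> p v23a" by (rule pi[OF lo14 hi14 lo23 hi23 d_14_23])
  have pp_15_18: "p v15a \<noteq> p v18a" by (rule pi[OF lo15 hi15 lo18 hi18 d_15_18])
  have pp_15_19: "p v15a \<noteq> p v19a" by (rule pi[OF lo15 hi15 lo19 hi19 d_15_19])
  have pp_15_22: "p v15a \<noteq> p v22a" by (rule pi[OF lo15 hi15 lo22 hi22 d_15_22])
  have pp_15_23: "p v15a \<noteq> p v23a" by (rule pi[OF lo15 hi15 lo23 hi23 d_15_23])
  have pp_16_17: "p v16a \<noteq> p v17a" by (rule pi[OF lo16 hi16 lo17 hi17 d_16_17])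
  have pp_16_20: "p v16a \<noteq> p v20a" by (rule pi[OF lo16 hi16 lo20 hi20 d_16_20])
  have pp_16_21: "p v16a \<noteq> p v21a" by (rule pi[OF lo16 hi16 lo21 hi21 d_16_21])
  have pp_17_21: "p v17a \<noteq> p v21a" by (rule pi[OF lo17 hi17 lo21 hi21 d_17_21])
  have pp_17_24: "p v17a \<noteq> p v24a" by (rule pi[OF lo17 hi17 lo24 hi24 d_17_24])
  have pp_18_19: "p v18a \<noteq> p v19a" by (rule pi[OF lo18 hi18 lo19 hi19 d_18_19])
  have pp_18_20: "p v18a \<noteq> p v20a" by (rule pi[OF lo18 hi18 lo20 hi20 d_18_20])
  have pp_18_21: "p v18a \<noteq> p v21a" by (rule pi[OF lo18 hi18 lo21 hi21 d_18_21])
  have pp_19_20: "p v19a \<noteq> p v20a" by (rule pi[OF lo19 hi19 lo20 hi20 d_19_20])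
  have pp_19_22: "p v19a \<noteq> p v22a" by (rule pi[OF lo19 hi19 lo22 hi22 d_19_22])
  have pp_19_24: "p v19a \<noteq> p v24a" by (rule pi[OF lo19 hi19 lo24 hi24 d_19_24])
  have pp_20_22: "p v20a \<noteq> p v22a" by (rule pi[OF lo20 hi20 lo22 hi22 d_20_22])
  have pp_20_24: "p v20a \<noteq> p v24a" by (rule pi[OF lo20 hi20 lo24 hi24 d_20_24])
  have pp_21_23: "p v21a \<noteq> p v23a" by (rule pi[OF lo21 hi21 lo23 hi23 d_21_23])
  have pp_22_23: "p v22a \<noteq> p v23a" by (rule pi[OF lo22 hi22 lo23 hi23 d_22_23])
  have pp_22_24: "p v22a \<noteq> p v24a" by (rule pi[OF lo22 hi22 lo24 hi24 d_22_24])
  have pp_23_24: "p v23a \<noteq> p v24a" by (rule pi[OF lo23 hi23 lo24 hi24 d_23_24])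
  show False
    by (rule csp_norm[where v0a="p v0a" and v1a="p v1a" and v2a="p v2a" and v3a="p v3a" and v4a="p v4a" and v5a="p v5a" and v6a="p v6a" and v7a="p v7a" and v8a="p v8a" and v9a="p v9a" and v10a="p v10a" and v11a="p v11a" and v12a="p v12a" and v13a="p v13a" and v14a="p v14a" and v15a="p v15a" and v16a="p v16a" and v17a="p v17a" and v18a="p v18a" and v19a="p v19a" and v20a="p v20a" and v21a="p v21a" and v22a="p v22a" and v23a="p v23a" and v24a="p v24a"]) (rule pc pr[THEN conjunct1] pr[THEN conjunct2] pp_0_1 pp_0_2 pp_0_4 pp_0_5 pp_0_6 pp_1_2 pp_1_3 pp_1_9 pp_1_10 pp_2_5 pp_2_6 pp_2_9 pp_2_10 pp_3_4 pp_3_7 pp_3_8 pp_4_8 pp_4_11 pp_4_12 pp_5_6 pp_5_7 pp_5_8 pp_6_7 pp_6_9 pp_6_11 pp_7_9 pp_7_11 pp_8_10 pp_8_12 pp_9_10 pp_9_11 pp_9_12 pp_10_11 pp_10_13 pp_10_14 pp_11_13 pp_11_14 pp_12_15 pp_12_16 pp_12_17 pp_13_14 pp_13_15 pp_13_17 pp_13_18 pp_13_19 pp_14_15 pp_14_16 pp_14_22 pp_14_23 pp_15_18 pp_15_19 pp_15_22 pp_15_23 pp_16_17 pp_16_20 pp_16_21 pp_17_21 pp_17_24 pp_18_19 pp_18_20 pp_18_21 pp_19_20 pp_19_22 pp_19_24 pp_20_22 pp_20_24 pp_21_23 pp_22_23 pp_22_24 pp_23_24)+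
qed

lemma lb3: assumes C: "inj_edge_coloring (S3 3) k c" and k4: "k \<le> 4" shows False
proof -
  have rg: "1 \<le> c {x, y} \<and> c {x, y} \<le> 4" if "S3 3 x y" for x y
    using C that k4 unfolding inj_edge_coloring_def by fastforce
  have lo0: "1 \<le> c {[0,0,0], [0,0,1]}" and hi0: "c {[0,0,0], [0,0,1]} \<le> 4" using rg[of "[0,0,0]" "[0,0,1]"] by (simp_all add: s3eval)
  have lo1: "1 \<le> c {[0,0,0], [0,0,2]}" and hi1: "c {[0,0,0], [0,0,2]} \<le> 4" using rg[of "[0,0,0]" "[0,0,2]"] by (simp_all add: s3eval)
  have lo2: "1 \<le> c {[0,0,1], [0,0,2]}" and hi2: "c {[0,0,1], [0,0,2]} \<le> 4" using rg[of "[0,0,1]" "[0,0,2]"] by (simp_all add: s3eval)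
  have lo3: "1 \<le> c {[0,0,1], [0,1,0]}" and hi3: "c {[0,0,1], [0,1,0]} \<le> 4" using rg[of "[0,0,1]" "[0,1,0]"] by (simp_all add: s3eval)
  have lo4: "1 \<le> c {[0,0,2], [0,2,0]}" and hi4: "c {[0,0,2], [0,2,0]} \<le> 4" using rg[of "[0,0,2]" "[0,2,0]"] by (simp_all add: s3eval)
  have lo5: "1 \<le> c {[0,1,0], [0,1,1]}" and hi5: "c {[0,1,0], [0,1,1]} \<le> 4" using rg[of "[0,1,0]" "[0,1,1]"] by (simp_all add: s3eval)
  have lo6: "1 \<le> c {[0,1,0], [0,1,2]}" and hi6: "c {[0,1,0], [0,1,2]} \<le> 4" using rg[of "[0,1,0]" "[0,1,2]"] by (simp_all add: s3eval)
  have lo7: "1 \<le> c {[0,1,1], [0,1,2]}" and hi7: "c {[0,1,1], [0,1,2]} \<le> 4" using rg[of "[0,1,1]" "[0,1,2]"] by (simp_all add: s3eval)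
  have lo8: "1 \<le> c {[0,1,2], [0,2,1]}" and hi8: "c {[0,1,2], [0,2,1]} \<le> 4" using rg[of "[0,1,2]" "[0,2,1]"] by (simp_all add: s3eval)
  have lo9: "1 \<le> c {[0,2,0], [0,2,1]}" and hi9: "c {[0,2,0], [0,2,1]} \<le> 4" using rg[of "[0,2,0]" "[0,2,1]"] by (simp_all add: s3eval)
  have lo10: "1 \<le> c {[0,2,0], [0,2,2]}" and hi10: "c {[0,2,0], [0,2,2]} \<le> 4" using rg[of "[0,2,0]" "[0,2,2]"] by (simp_all add: s3eval)
  have lo11: "1 \<le> c {[0,2,1], [0,2,2]}" and hi11: "c {[0,2,1], [0,2,2]} \<le> 4" using rg[of "[0,2,1]" "[0,2,2]"] by (simp_all add: s3eval)
  have lo12: "1 \<le> c {[0,2,2], [2,0,0]}" and hi12: "c {[0,2,2], [2,0,0]} \<le> 4" using rg[of "[0,2,2]" "[2,0,0]"] by (simp_all add: s3eval)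
  have lo13: "1 \<le> c {[2,0,0], [2,0,1]}" and hi13: "c {[2,0,0], [2,0,1]} \<le> 4" using rg[of "[2,0,0]" "[2,0,1]"] by (simp_all add: s3eval)
  have lo14: "1 \<le> c {[2,0,0], [2,0,2]}" and hi14: "c {[2,0,0], [2,0,2]} \<le> 4" using rg[of "[2,0,0]" "[2,0,2]"] by (simp_all add: s3eval)
  have lo15: "1 \<le> c {[2,0,1], [2,0,2]}" and hi15: "c {[2,0,1], [2,0,2]} \<le> 4" using rg[of "[2,0,1]" "[2,0,2]"] by (simp_all add: s3eval)
  have lo16: "1 \<le> c {[2,0,1], [2,1,0]}" and hi16: "c {[2,0,1], [2,1,0]} \<le> 4" using rg[of "[2,0,1]" "[2,1,0]"] by (simp_all add: s3eval)
  have lo17: "1 \<le> c {[2,0,2], [2,2,0]}" and hi17: "c {[2,0,2], [2,2,0]} \<le> 4" using rg[of "[2,0,2]" "[2,2,0]"] by (simp_all add: s3eval)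
  have lo18: "1 \<le> c {[2,1,0], [2,1,1]}" and hi18: "c {[2,1,0], [2,1,1]} \<le> 4" using rg[of "[2,1,0]" "[2,1,1]"] by (simp_all add: s3eval)
  have lo19: "1 \<le> c {[2,1,0], [2,1,2]}" and hi19: "c {[2,1,0], [2,1,2]} \<le> 4" using rg[of "[2,1,0]" "[2,1,2]"] by (simp_all add: s3eval)
  have lo20: "1 \<le> c {[2,1,1], [2,1,2]}" and hi20: "c {[2,1,1], [2,1,2]} \<le> 4" using rg[of "[2,1,1]" "[2,1,2]"] by (simp_all add: s3eval)
  have lo21: "1 \<le> c {[2,1,2], [2,2,1]}" and hi21: "c {[2,1,2], [2,2,1]} \<le> 4" using rg[of "[2,1,2]" "[2,2,1]"] by (simp_all add: s3eval)
  have lo22: "1 \<le> c {[2,2,0], [2,2,1]}" and hi22: "c {[2,2,0], [2,2,1]} \<le> 4" using rg[of "[2,2,0]" "[2,2,1]"] by (simp_all add: s3eval)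
  have lo23: "1 \<le> c {[2,2,0], [2,2,2]}" and hi23: "c {[2,2,0], [2,2,2]} \<le> 4" using rg[of "[2,2,0]" "[2,2,2]"] by (simp_all add: s3eval)
  have lo24: "1 \<le> c {[2,2,1], [2,2,2]}" and hi24: "c {[2,2,1], [2,2,2]} \<le> 4" using rg[of "[2,2,1]" "[2,2,2]"] by (simp_all add: s3eval)
  have d_0_1: "c {[0,0,0], [0,0,1]} \<noteq> c {[0,0,0], [0,0,2]}"
  proof -
    have "c {[0,0,0], [0,0,1]} \<noteq> c {[0,0,2], [0,0,0]}" by (rule cf[OF C]) (simp_all add: s3eval)
    then show ?thesis by (simp add: insert_commute)
  qed
  have d_0_2: "c {[0,0,0], [0,0,1]} \<noteq> c {[0,0,1], [0,0,2]}"
  proof -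
    have "c {[0,0,1], [0,0,0]} \<noteq> c {[0,0,2], [0,0,1]}" by (rule cf[OF C]) (simp_all add: s3eval)
    then show ?thesis by (simp add: insert_commute)
  qed
  have d_0_4: "c {[0,0,0], [0,0,1]} \<noteq> c {[0,0,2], [0,2,0]}"
  proof -
    have "c {[0,0,0], [0,0,1]} \<noteq> c {[0,0,2], [0,2,0]}" by (rule cf[OF C]) (simp_all add: s3eval)
    then show ?thesis by (simp add: insert_commute)
  qed
  have d_0_5: "c {[0,0,0], [0,0,1]} \<noteq> c {[0,1,0], [0,1,1]}"
  proof -
    have "c {[0,0,0], [0,0,1]} \<noteq> c {[0,1,0], [0,1,1]}" by (rule cf[OF C]) (simp_all add: s3eval)
    then show ?thesis by (simp add: insert_commute)
  qed
  have d_0_6: "c {[0,0,0], [0,0,1]} \<noteq> c {[0,1,0], [0,1,2]}"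
  proof -
    have "c {[0,0,0], [0,0,1]} \<noteq> c {[0,1,0], [0,1,2]}" by (rule cf[OF C]) (simp_all add: s3eval)
    then show ?thesis by (simp add: insert_commute)
  qed
  have d_1_2: "c {[0,0,0], [0,0,2]} \<noteq> c {[0,0,1], [0,0,2]}"
  proof -
    have "c {[0,0,2], [0,0,0]} \<noteq> c {[0,0,1], [0,0,2]}" by (rule cf[OF C]) (simp_all add: s3eval)
    then show ?thesis by (simp add: insert_commute)
  qed
  have d_1_3: "c {[0,0,0], [0,0,2]} \<noteq> c {[0,0,1], [0,1,0]}"
  proof -
    have "c {[0,0,0], [0,0,2]} \<noteq> c {[0,0,1], [0,1,0]}" by (rule cf[OF C]) (simp_all add: s3eval)
    then show ?thesis by (simp add: insert_commute)
  qed
  have d_1_9: "c {[0,0,0], [0,0,2]} \<noteq> c {[0,2,0], [0,2,1]}"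
  proof -
    have "c {[0,0,0], [0,0,2]} \<noteq> c {[0,2,0], [0,2,1]}" by (rule cf[OF C]) (simp_all add: s3eval)
    then show ?thesis by (simp add: insert_commute)
  qed
  have d_1_10: "c {[0,0,0], [0,0,2]} \<noteq> c {[0,2,0], [0,2,2]}"
  proof -
    have "c {[0,0,0], [0,0,2]} \<noteq> c {[0,2,0], [0,2,2]}" by (rule cf[OF C]) (simp_all add: s3eval)
    then show ?thesis by (simp add: insert_commute)
  qed
  have d_2_5: "c {[0,0,1], [0,0,2]} \<noteq> c {[0,1,0], [0,1,1]}"
  proof -
    have "c {[0,0,2], [0,0,1]} \<noteq> c {[0,1,0], [0,1,1]}" by (rule cf[OF C]) (simp_all add: s3eval)
    then show ?thesis by (simp add: insert_commute)
  qed
  have d_2_6: "c {[0,0,1], [0,0,2]} \<noteq> c {[0,1,0], [0,1,2]}"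
  proof -
    have "c {[0,0,2], [0,0,1]} \<noteq> c {[0,1,0], [0,1,2]}" by (rule cf[OF C]) (simp_all add: s3eval)
    then show ?thesis by (simp add: insert_commute)
  qed
  have d_2_9: "c {[0,0,1], [0,0,2]} \<noteq> c {[0,2,0], [0,2,1]}"
  proof -
    have "c {[0,0,1], [0,0,2]} \<noteq> c {[0,2,0], [0,2,1]}" by (rule cf[OF C]) (simp_all add: s3eval)
    then show ?thesis by (simp add: insert_commute)
  qed
  have d_2_10: "c {[0,0,1], [0,0,2]} \<noteq> c {[0,2,0], [0,2,2]}"
  proof -
    have "c {[0,0,1], [0,0,2]} \<noteq> c {[0,2,0], [0,2,2]}" by (rule cf[OF C]) (simp_all add: s3eval)
    then show ?thesis by (simp add: insert_commute)
  qed
  have d_3_4: "c {[0,0,1], [0,1,0]} \<noteq> c {[0,0,2], [0,2,0]}"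
  proof -
    have "c {[0,1,0], [0,0,1]} \<noteq> c {[0,0,2], [0,2,0]}" by (rule cf[OF C]) (simp_all add: s3eval)
    then show ?thesis by (simp add: insert_commute)
  qed
  have d_3_7: "c {[0,0,1], [0,1,0]} \<noteq> c {[0,1,1], [0,1,2]}"
  proof -
    have "c {[0,0,1], [0,1,0]} \<noteq> c {[0,1,1], [0,1,2]}" by (rule cf[OF C]) (simp_all add: s3eval)
    then show ?thesis by (simp add: insert_commute)
  qed
  have d_3_8: "c {[0,0,1], [0,1,0]} \<noteq> c {[0,1,2], [0,2,1]}"
  proof -
    have "c {[0,0,1], [0,1,0]} \<noteq> c {[0,1,2], [0,2,1]}" by (rule cf[OF C]) (simp_all add: s3eval)
    then show ?thesis by (simp add: insert_commute)
  qed
  have d_4_8: "c {[0,0,2], [0,2,0]} \<noteq> c {[0,1,2], [0,2,1]}"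
  proof -
    have "c {[0,0,2], [0,2,0]} \<noteq> c {[0,2,1], [0,1,2]}" by (rule cf[OF C]) (simp_all add: s3eval)
    then show ?thesis by (simp add: insert_commute)
  qed
  have d_4_11: "c {[0,0,2], [0,2,0]} \<noteq> c {[0,2,1], [0,2,2]}"
  proof -
    have "c {[0,0,2], [0,2,0]} \<noteq> c {[0,2,1], [0,2,2]}" by (rule cf[OF C]) (simp_all add: s3eval)
    then show ?thesis by (simp add: insert_commute)
  qed
  have d_4_12: "c {[0,0,2], [0,2,0]} \<noteq> c {[0,2,2], [2,0,0]}"
  proof -
    have "c {[0,0,2], [0,2,0]} \<noteq> c {[0,2,2], [2,0,0]}" by (rule cf[OF C]) (simp_all add: s3eval)
    then show ?thesis by (simp add: insert_commute)
  qed
  have d_5_6: "c {[0,1,0], [0,1,1]} \<noteq> c {[0,1,0], [0,1,2]}"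
  proof -
    have "c {[0,1,0], [0,1,1]} \<noteq> c {[0,1,2], [0,1,0]}" by (rule cf[OF C]) (simp_all add: s3eval)
    then show ?thesis by (simp add: insert_commute)
  qed
  have d_5_7: "c {[0,1,0], [0,1,1]} \<noteq> c {[0,1,1], [0,1,2]}"
  proof -
    have "c {[0,1,1], [0,1,0]} \<noteq> c {[0,1,2], [0,1,1]}" by (rule cf[OF C]) (simp_all add: s3eval)
    then show ?thesis by (simp add: insert_commute)
  qed
  have d_5_8: "c {[0,1,0], [0,1,1]} \<noteq> c {[0,1,2], [0,2,1]}"
  proof -
    have "c {[0,1,0], [0,1,1]} \<noteq> c {[0,1,2], [0,2,1]}" by (rule cf[OF C]) (simp_all add: s3eval)
    then show ?thesis by (simp add: insert_commute)
  qed
  have d_6_7: "c {[0,1,0], [0,1,2]} \<noteq> c {[0,1,1], [0,1,2]}"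
  proof -
    have "c {[0,1,2], [0,1,0]} \<noteq> c {[0,1,1], [0,1,2]}" by (rule cf[OF C]) (simp_all add: s3eval)
    then show ?thesis by (simp add: insert_commute)
  qed
  have d_6_9: "c {[0,1,0], [0,1,2]} \<noteq> c {[0,2,0], [0,2,1]}"
  proof -
    have "c {[0,1,0], [0,1,2]} \<noteq> c {[0,2,1], [0,2,0]}" by (rule cf[OF C]) (simp_all add: s3eval)
    then show ?thesis by (simp add: insert_commute)
  qed
  have d_6_11: "c {[0,1,0], [0,1,2]} \<noteq> c {[0,2,1], [0,2,2]}"
  proof -
    have "c {[0,1,0], [0,1,2]} \<noteq> c {[0,2,1], [0,2,2]}" by (rule cf[OF C]) (simp_all add: s3eval)
    then show ?thesis by (simp add: insert_commute)
  qed
  have d_7_9: "c {[0,1,1], [0,1,2]} \<noteq> c {[0,2,0], [0,2,1]}"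
  proof -
    have "c {[0,1,1], [0,1,2]} \<noteq> c {[0,2,1], [0,2,0]}" by (rule cf[OF C]) (simp_all add: s3eval)
    then show ?thesis by (simp add: insert_commute)
  qed
  have d_7_11: "c {[0,1,1], [0,1,2]} \<noteq> c {[0,2,1], [0,2,2]}"
  proof -
    have "c {[0,1,1], [0,1,2]} \<noteq> c {[0,2,1], [0,2,2]}" by (rule cf[OF C]) (simp_all add: s3eval)
    then show ?thesis by (simp add: insert_commute)
  qed
  have d_8_10: "c {[0,1,2], [0,2,1]} \<noteq> c {[0,2,0], [0,2,2]}"
  proof -
    have "c {[0,1,2], [0,2,1]} \<noteq> c {[0,2,0], [0,2,2]}" by (rule cf[OF C]) (simp_all add: s3eval)
    then show ?thesis by (simp add: insert_commute)
  qed
  have d_8_12: "c {[0,1,2], [0,2,1]} \<noteq> c {[0,2,2], [2,0,0]}"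
  proof -
    have "c {[0,1,2], [0,2,1]} \<noteq> c {[0,2,2], [2,0,0]}" by (rule cf[OF C]) (simp_all add: s3eval)
    then show ?thesis by (simp add: insert_commute)
  qed
  have d_9_10: "c {[0,2,0], [0,2,1]} \<noteq> c {[0,2,0], [0,2,2]}"
  proof -
    have "c {[0,2,0], [0,2,1]} \<noteq> c {[0,2,2], [0,2,0]}" by (rule cf[OF C]) (simp_all add: s3eval)
    then show ?thesis by (simp add: insert_commute)
  qed
  have d_9_11: "c {[0,2,0], [0,2,1]} \<noteq> c {[0,2,1], [0,2,2]}"
  proof -
    have "c {[0,2,1], [0,2,0]} \<noteq> c {[0,2,2], [0,2,1]}" by (rule cf[OF C]) (simp_all add: s3eval)
    then show ?thesis by (simp add: insert_commute)
  qed
  have d_9_12: "c {[0,2,0], [0,2,1]} \<noteq> c {[0,2,2], [2,0,0]}"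
  proof -
    have "c {[0,2,0], [0,2,1]} \<noteq> c {[0,2,2], [2,0,0]}" by (rule cf[OF C]) (simp_all add: s3eval)
    then show ?thesis by (simp add: insert_commute)
  qed
  have d_10_11: "c {[0,2,0], [0,2,2]} \<noteq> c {[0,2,1], [0,2,2]}"
  proof -
    have "c {[0,2,2], [0,2,0]} \<noteq> c {[0,2,1], [0,2,2]}" by (rule cf[OF C]) (simp_all add: s3eval)
    then show ?thesis by (simp add: insert_commute)
  qed
  have d_10_13: "c {[0,2,0], [0,2,2]} \<noteq> c {[2,0,0], [2,0,1]}"
  proof -
    have "c {[0,2,0], [0,2,2]} \<noteq> c {[2,0,0], [2,0,1]}" by (rule cf[OF C]) (simp_all add: s3eval)
    then show ?thesis by (simp add: insert_commute)
  qed
  have d_10_14: "c {[0,2,0], [0,2,2]} \<noteq> c {[2,0,0], [2,0,2]}"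
  proof -
    have "c {[0,2,0], [0,2,2]} \<noteq> c {[2,0,0], [2,0,2]}" by (rule cf[OF C]) (simp_all add: s3eval)
    then show ?thesis by (simp add: insert_commute)
  qed
  have d_11_13: "c {[0,2,1], [0,2,2]} \<noteq> c {[2,0,0], [2,0,1]}"
  proof -
    have "c {[0,2,1], [0,2,2]} \<noteq> c {[2,0,0], [2,0,1]}" by (rule cf[OF C]) (simp_all add: s3eval)
    then show ?thesis by (simp add: insert_commute)
  qed
  have d_11_14: "c {[0,2,1], [0,2,2]} \<noteq> c {[2,0,0], [2,0,2]}"
  proof -
    have "c {[0,2,1], [0,2,2]} \<noteq> c {[2,0,0], [2,0,2]}" by (rule cf[OF C]) (simp_all add: s3eval)
    then show ?thesis by (simp add: insert_commute)
  qed
  have d_12_15: "c {[0,2,2], [2,0,0]} \<noteq> c {[2,0,1], [2,0,2]}"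
  proof -
    have "c {[0,2,2], [2,0,0]} \<noteq> c {[2,0,1], [2,0,2]}" by (rule cf[OF C]) (simp_all add: s3eval)
    then show ?thesis by (simp add: insert_commute)
  qed
  have d_12_16: "c {[0,2,2], [2,0,0]} \<noteq> c {[2,0,1], [2,1,0]}"
  proof -
    have "c {[0,2,2], [2,0,0]} \<noteq> c {[2,0,1], [2,1,0]}" by (rule cf[OF C]) (simp_all add: s3eval)
    then show ?thesis by (simp add: insert_commute)
  qed
  have d_12_17: "c {[0,2,2], [2,0,0]} \<noteq> c {[2,0,2], [2,2,0]}"
  proof -
    have "c {[0,2,2], [2,0,0]} \<noteq> c {[2,0,2], [2,2,0]}" by (rule cf[OF C]) (simp_all add: s3eval)
    then show ?thesis by (simp add: insert_commute)
  qed
  have d_13_14: "c {[2,0,0], [2,0,1]} \<noteq> c {[2,0,0], [2,0,2]}"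
  proof -
    have "c {[2,0,0], [2,0,1]} \<noteq> c {[2,0,2], [2,0,0]}" by (rule cf[OF C]) (simp_all add: s3eval)
    then show ?thesis by (simp add: insert_commute)
  qed
  have d_13_15: "c {[2,0,0], [2,0,1]} \<noteq> c {[2,0,1], [2,0,2]}"
  proof -
    have "c {[2,0,1], [2,0,0]} \<noteq> c {[2,0,2], [2,0,1]}" by (rule cf[OF C]) (simp_all add: s3eval)
    then show ?thesis by (simp add: insert_commute)
  qed
  have d_13_17: "c {[2,0,0], [2,0,1]} \<noteq> c {[2,0,2], [2,2,0]}"
  proof -
    have "c {[2,0,0], [2,0,1]} \<noteq> c {[2,0,2], [2,2,0]}" by (rule cf[OF C]) (simp_all add: s3eval)
    then show ?thesis by (simp add: insert_commute)
  qed
  have d_13_18: "c {[2,0,0], [2,0,1]} \<noteq> c {[2,1,0], [2,1,1]}"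
  proof -
    have "c {[2,0,0], [2,0,1]} \<noteq> c {[2,1,0], [2,1,1]}" by (rule cf[OF C]) (simp_all add: s3eval)
    then show ?thesis by (simp add: insert_commute)
  qed
  have d_13_19: "c {[2,0,0], [2,0,1]} \<noteq> c {[2,1,0], [2,1,2]}"
  proof -
    have "c {[2,0,0], [2,0,1]} \<noteq> c {[2,1,0], [2,1,2]}" by (rule cf[OF C]) (simp_all add: s3eval)
    then show ?thesis by (simp add: insert_commute)
  qed
  have d_14_15: "c {[2,0,0], [2,0,2]} \<noteq> c {[2,0,1], [2,0,2]}"
  proof -
    have "c {[2,0,2], [2,0,0]} \<noteq> c {[2,0,1], [2,0,2]}" by (rule cf[OF C]) (simp_all add: s3eval)
    then show ?thesis by (simp add: insert_commute)
  qed
  have d_14_16: "c {[2,0,0], [2,0,2]} \<noteq> c {[2,0,1], [2,1,0]}"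
  proof -
    have "c {[2,0,0], [2,0,2]} \<noteq> c {[2,0,1], [2,1,0]}" by (rule cf[OF C]) (simp_all add: s3eval)
    then show ?thesis by (simp add: insert_commute)
  qed
  have d_14_22: "c {[2,0,0], [2,0,2]} \<noteq> c {[2,2,0], [2,2,1]}"
  proof -
    have "c {[2,0,0], [2,0,2]} \<noteq> c {[2,2,0], [2,2,1]}" by (rule cf[OF C]) (simp_all add: s3eval)
    then show ?thesis by (simp add: insert_commute)
  qed
  have d_14_23: "c {[2,0,0], [2,0,2]} \<noteq> c {[2,2,0], [2,2,2]}"
  proof -
    have "c {[2,0,0], [2,0,2]} \<noteq> c {[2,2,0], [2,2,2]}" by (rule cf[OF C]) (simp_all add: s3eval)
    then show ?thesis by (simp add: insert_commute)
  qed
  have d_15_18: "c {[2,0,1], [2,0,2]} \<noteq> c {[2,1,0], [2,1,1]}"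
  proof -
    have "c {[2,0,2], [2,0,1]} \<noteq> c {[2,1,0], [2,1,1]}" by (rule cf[OF C]) (simp_all add: s3eval)
    then show ?thesis by (simp add: insert_commute)
  qed
  have d_15_19: "c {[2,0,1], [2,0,2]} \<noteq> c {[2,1,0], [2,1,2]}"
  proof -
    have "c {[2,0,2], [2,0,1]} \<noteq> c {[2,1,0], [2,1,2]}" by (rule cf[OF C]) (simp_all add: s3eval)
    then show ?thesis by (simp add: insert_commute)
  qed
  have d_15_22: "c {[2,0,1], [2,0,2]} \<noteq> c {[2,2,0], [2,2,1]}"
  proof -
    have "c {[2,0,1], [2,0,2]} \<noteq> c {[2,2,0], [2,2,1]}" by (rule cf[OF C]) (simp_all add: s3eval)
    then show ?thesis by (simp add: insert_commute)
  qed
  have d_15_23: "c {[2,0,1], [2,0,2]} \<noteq> c {[2,2,0], [2,2,2]}"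
  proof -
    have "c {[2,0,1], [2,0,2]} \<noteq> c {[2,2,0], [2,2,2]}" by (rule cf[OF C]) (simp_all add: s3eval)
    then show ?thesis by (simp add: insert_commute)
  qed
  have d_16_17: "c {[2,0,1], [2,1,0]} \<noteq> c {[2,0,2], [2,2,0]}"
  proof -
    have "c {[2,1,0], [2,0,1]} \<noteq> c {[2,0,2], [2,2,0]}" by (rule cf[OF C]) (simp_all add: s3eval)
    then show ?thesis by (simp add: insert_commute)
  qed
  have d_16_20: "c {[2,0,1], [2,1,0]} \<noteq> c {[2,1,1], [2,1,2]}"
  proof -
    have "c {[2,0,1], [2,1,0]} \<noteq> c {[2,1,1], [2,1,2]}" by (rule cf[OF C]) (simp_all add: s3eval)
    then show ?thesis by (simp add: insert_commute)
  qed
  have d_16_21: "c {[2,0,1], [2,1,0]} \<noteq> c {[2,1,2], [2,2,1]}"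
  proof -
    have "c {[2,0,1], [2,1,0]} \<noteq> c {[2,1,2], [2,2,1]}" by (rule cf[OF C]) (simp_all add: s3eval)
    then show ?thesis by (simp add: insert_commute)
  qed
  have d_17_21: "c {[2,0,2], [2,2,0]} \<noteq> c {[2,1,2], [2,2,1]}"
  proof -
    have "c {[2,0,2], [2,2,0]} \<noteq> c {[2,2,1], [2,1,2]}" by (rule cf[OF C]) (simp_all add: s3eval)
    then show ?thesis by (simp add: insert_commute)
  qed
  have d_17_24: "c {[2,0,2], [2,2,0]} \<noteq> c {[2,2,1], [2,2,2]}"
  proof -
    have "c {[2,0,2], [2,2,0]} \<noteq> c {[2,2,1], [2,2,2]}" by (rule cf[OF C]) (simp_all add: s3eval)
    then show ?thesis by (simp add: insert_commute)
  qed
  have d_18_19: "c {[2,1,0], [2,1,1]} \<noteq> c {[2,1,0], [2,1,2]}"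
  proof -
    have "c {[2,1,0], [2,1,1]} \<noteq> c {[2,1,2], [2,1,0]}" by (rule cf[OF C]) (simp_all add: s3eval)
    then show ?thesis by (simp add: insert_commute)
  qed
  have d_18_20: "c {[2,1,0], [2,1,1]} \<noteq> c {[2,1,1], [2,1,2]}"
  proof -
    have "c {[2,1,1], [2,1,0]} \<noteq> c {[2,1,2], [2,1,1]}" by (rule cf[OF C]) (simp_all add: s3eval)
    then show ?thesis by (simp add: insert_commute)
  qed
  have d_18_21: "c {[2,1,0], [2,1,1]} \<noteq> c {[2,1,2], [2,2,1]}"
  proof -
    have "c {[2,1,0], [2,1,1]} \<noteq> c {[2,1,2], [2,2,1]}" by (rule cf[OF C]) (simp_all add: s3eval)
    then show ?thesis by (simp add: insert_commute)
  qed
  have d_19_20: "c {[2,1,0], [2,1,2]} \<noteq> c {[2,1,1], [2,1,2]}"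
  proof -
    have "c {[2,1,2], [2,1,0]} \<noteq> c {[2,1,1], [2,1,2]}" by (rule cf[OF C]) (simp_all add: s3eval)
    then show ?thesis by (simp add: insert_commute)
  qed
  have d_19_22: "c {[2,1,0], [2,1,2]} \<noteq> c {[2,2,0], [2,2,1]}"
  proof -
    have "c {[2,1,0], [2,1,2]} \<noteq> c {[2,2,1], [2,2,0]}" by (rule cf[OF C]) (simp_all add: s3eval)
    then show ?thesis by (simp add: insert_commute)
  qed
  have d_19_24: "c {[2,1,0], [2,1,2]} \<noteq> c {[2,2,1], [2,2,2]}"
  proof -
    have "c {[2,1,0], [2,1,2]} \<noteq> c {[2,2,1], [2,2,2]}" by (rule cf[OF C]) (simp_all add: s3eval)
    then show ?thesis by (simp add: insert_commute)
  qed
  have d_20_22: "c {[2,1,1], [2,1,2]} \<noteq> c {[2,2,0], [2,2,1]}"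
  proof -
    have "c {[2,1,1], [2,1,2]} \<noteq> c {[2,2,1], [2,2,0]}" by (rule cf[OF C]) (simp_all add: s3eval)
    then show ?thesis by (simp add: insert_commute)
  qed
  have d_20_24: "c {[2,1,1], [2,1,2]} \<noteq> c {[2,2,1], [2,2,2]}"
  proof -
    have "c {[2,1,1], [2,1,2]} \<noteq> c {[2,2,1], [2,2,2]}" by (rule cf[OF C]) (simp_all add: s3eval)
    then show ?thesis by (simp add: insert_commute)
  qed
  have d_21_23: "c {[2,1,2], [2,2,1]} \<noteq> c {[2,2,0], [2,2,2]}"
  proof -
    have "c {[2,1,2], [2,2,1]} \<noteq> c {[2,2,0], [2,2,2]}" by (rule cf[OF C]) (simp_all add: s3eval)
    then show ?thesis by (simp add: insert_commute)
  qed
  have d_22_23: "c {[2,2,0], [2,2,1]} \<noteq> c {[2,2,0], [2,2,2]}"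
  proof -
    have "c {[2,2,0], [2,2,1]} \<noteq> c {[2,2,2], [2,2,0]}" by (rule cf[OF C]) (simp_all add: s3eval)
    then show ?thesis by (simp add: insert_commute)
  qed
  have d_22_24: "c {[2,2,0], [2,2,1]} \<noteq> c {[2,2,1], [2,2,2]}"
  proof -
    have "c {[2,2,1], [2,2,0]} \<noteq> c {[2,2,2], [2,2,1]}" by (rule cf[OF C]) (simp_all add: s3eval)
    then show ?thesis by (simp add: insert_commute)
  qed
  have d_23_24: "c {[2,2,0], [2,2,2]} \<noteq> c {[2,2,1], [2,2,2]}"
  proof -
    have "c {[2,2,2], [2,2,0]} \<noteq> c {[2,2,1], [2,2,2]}" by (rule cf[OF C]) (simp_all add: s3eval)
    then show ?thesis by (simp add: insert_commute)
  qed
  show False by (rule csp[OF lo0 hi0 lo1 hi1 lo2 hi2 lo3 hi3 lo4 hi4 lo5 hi5 lo6 hi6 lo7 hi7 lo8 hi8 lo9 hi9 lo10 hi10 lo11 hi11 lo12 hi12 lo13 hi13 lo14 hi14 lo15 hi15 lo16 hi16 lo17 hi17 lo18 hi18 lo19 hi19 lo20 hi20 lo21 hi21 lo22 hi22 lo23 hi23 lo24 hi24 d_0_1 d_0_2 d_0_4 d_0_5 d_0_6 d_1_2 d_1_3 d_1_9 d_1_10 d_2_5 d_2_6 d_2_9 d_2_10 d_3_4 d_3_7 d_3_8 d_4_8 d_4_11 d_4_12 d_5_6 d_5_7 d_5_8 d_6_7 d_6_9 d_6_11 d_7_9 d_7_11 d_8_10 d_8_12 d_9_10 d_9_11 d_9_12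 d_10_11 d_10_13 d_10_14 d_11_13 d_11_14 d_12_15 d_12_16 d_12_17 d_13_14 d_13_15 d_13_17 d_13_18 d_13_19 d_14_15 d_14_16 d_14_22 d_14_23 d_15_18 d_15_19 d_15_22 d_15_23 d_16_17 d_16_20 d_16_21 d_17_21 d_17_24 d_18_19 d_18_20 d_18_21 d_19_20 d_19_22 d_19_24 d_20_22 d_20_24 d_21_23 d_22_23 d_22_24 d_23_24])
qed


lemma S3_emb: "S3 m u v \<Longrightarrow> S3 (p + m) (replicate p 0 @ u) (replicate p 0 @ v)"
  by (induction p) (auto simp: sadj_Suc)

lemma mono3:
  assumes C: "inj_edge_coloring (S3 n) k c" and n3: "n \<ge> 3"
  shows "inj_edge_coloring (S3 3) k (\<lambda>S. c ((\<lambda>u. replicate (n - 3) 0 @ u) ` S))"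
proof -
  let ?e = "\<lambda>u::nat list. replicate (n - 3) 0 @ u"
  have E: "S3 n (?e x) (?e y)" if "S3 3 x y" for x y
    using S3_emb[OF that, of "n - 3"] n3 by simp
  have I: "?e x = ?e y \<longleftrightarrow> x = y" for x y by simp
  show ?thesis
    unfolding inj_edge_coloring_def
  proof (intro conjI allI impI)
    fix x y assume "S3 3 x y"
    then show "c (?e ` {x, y}) \<in> {1..k}" using C E unfolding inj_edge_coloring_def by simp
  next
    fix x y z u
    assume H: "S3 3 x y \<and> S3 3 y z \<and> S3 3 z u \<and> x \<noteq> y \<and> y \<noteq> z \<and> x \<noteq> z \<and> u \<noteq> y \<and> u \<noteq> z"
    have "c {?e x, ?e y} \<noteq> c {?e z, ?e u}"
      by (rule cf[OF C]) (use H E I in auto)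
    then show "c (?e ` {x, y}) \<noteq> c (?e ` {z, u})" by simp
  qed
qed

lemma card3: "(a::nat) \<in> {1..k} \<Longrightarrow> b \<in> {1..k} \<Longrightarrow> c \<in> {1..k} \<Longrightarrow> a \<noteq> b \<Longrightarrow> a \<noteq> c \<Longrightarrow> b \<noteq> c \<Longrightarrow> 3 \<le> k"
proof -
  assume H: "a \<in> {1..k}" "b \<in> {1..k}" "c \<in> {1..k}" "a \<noteq> b" "a \<noteq> c" "b \<noteq> c"
  have "card {a,b,c} = 3" using H by (auto simp: card_insert_if)
  moreover have "card {a,b,c} \<le> card {1..k}" by (rule card_mono) (use H in auto)
  ultimately show "3 \<le> k" by simp
qed

lemma card4: "(a::nat) \<in> {1..k} \<Longrightarrow> b \<in> {1..k} \<Longrightarrow> c \<in> {1..k} \<Longrightarrow> d \<in> {1..k} \<Longrightarrow>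
   a \<noteq> b \<Longrightarrow> a \<noteq> c \<Longrightarrow> a \<noteq> d \<Longrightarrow> b \<noteq> c \<Longrightarrow> b \<noteq> d \<Longrightarrow> c \<noteq> d \<Longrightarrow> 4 \<le> k"
proof -
  assume H: "a \<in> {1..k}" "b \<in> {1..k}" "c \<in> {1..k}" "d \<in> {1..k}" "a \<noteq> b" "a \<noteq> c" "a \<noteq> d" "b \<noteq> c" "b \<noteq> d" "c \<noteq> d"
  have "card {a,b,c,d} = 4" using H by (auto simp: card_insert_if)
  moreover have "card {a,b,c,d} \<le> card {1..k}" by (rule card_mono) (use H in auto)
  ultimately show "4 \<le> k" by simp
qed

lemma lb1: assumes C: "inj_edge_coloring (S3 1) k c" shows "3 \<le> k"
proof -
  have e1: "S3 1 [0] [1]" by (simp add: sadj_Suc K3_adj_def)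
  have e2: "S3 1 [1] [2]" by (simp add: sadj_Suc K3_adj_def)
  have e3: "S3 1 [2] [0]" by (simp add: sadj_Suc K3_adj_def)
  have e4: "S3 1 [1] [0]" by (simp add: sadj_Suc K3_adj_def)
  have e5: "S3 1 [2] [1]" by (simp add: sadj_Suc K3_adj_def)
  have e6: "S3 1 [0] [2]" by (simp add: sadj_Suc K3_adj_def)
  note e = e1 e2 e3 e4 e5 e6
  have r: "c {[0],[1]} \<in> {1..k}" "c {[1],[2]} \<in> {1..k}" "c {[2],[0]} \<in> {1..k}"
    using C e unfolding inj_edge_coloring_def by blast+
  have "c {[0],[1]} \<noteq> c {[2],[0]}" by (rule cf[OF C]) (simp_all add: sadj_Suc K3_adj_def)
  moreover have "c {[1],[2]} \<noteq> c {[0],[1]}" by (rule cf[OF C]) (simp_all add: sadj_Suc K3_adj_def)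
  moreover have "c {[2],[0]} \<noteq> c {[1],[2]}" by (rule cf[OF C]) (simp_all add: sadj_Suc K3_adj_def)
  ultimately show ?thesis using card3[OF r] by metis
qed

lemma lb2: assumes C: "inj_edge_coloring (S3 2) k c" shows "4 \<le> k"
proof -
  have e: "S3 2 x y" if "(x, y) \<in> set L2" for x y using that S3_2_iff by blast
  have e2: "S3 2 [0,1] [0,0]" "S3 2 [0,0] [0,2]" "S3 2 [0,2] [0,1]" "S3 2 [0,0] [0,1]" "S3 2 [0,1] [1,0]"
     "S3 2 [1,0] [1,1]" "S3 2 [1,0] [1,2]" "S3 2 [0,1] [0,2]" "S3 2 [1,1] [1,2]" "S3 2 [1,2] [1,0]"
    by (rule e, simp add: L2_def)+
  have r: "c {[0,0],[0,1]} \<in> {1..k}" "c {[0,1],[0,2]} \<in> {1..k}" "c {[1,0],[1,1]} \<in> {1..k}" "c {[1,0],[1,2]} \<in> {1..k}"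
    using C e unfolding inj_edge_coloring_def by (simp_all add: L2_def)
  have "c {[0,1],[0,0]} \<noteq> c {[0,2],[0,1]}" by (rule cf[OF C]) (simp_all add: sadj_Suc K3_adj_def numeral_2_eq_2)
  then have d1: "c {[0,0],[0,1]} \<noteq> c {[0,1],[0,2]}" by (simp add: insert_commute)
  have "c {[1,0],[1,1]} \<noteq> c {[1,2],[1,0]}" by (rule cf[OF C]) (simp_all add: sadj_Suc K3_adj_def numeral_2_eq_2)
  then have d2: "c {[1,0],[1,1]} \<noteq> c {[1,0],[1,2]}" by (simp add: insert_commute)
  have d3: "c {[0,0],[0,1]} \<noteq> c {[1,0],[1,1]}" by (rule cf[OF C]) (simp_all add: sadj_Suc K3_adj_def numeral_2_eq_2)
  have d4: "c {[0,0],[0,1]} \<noteq> c {[1,0],[1,2]}" by (rule cf[OF C]) (simp_all add: sadj_Suc K3_adj_def numeral_2_eq_2)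
  have "c {[0,2],[0,1]} \<noteq> c {[1,0],[1,1]}" by (rule cf[OF C]) (simp_all add: sadj_Suc K3_adj_def numeral_2_eq_2)
  then have d5: "c {[0,1],[0,2]} \<noteq> c {[1,0],[1,1]}" by (simp add: insert_commute)
  have "c {[0,2],[0,1]} \<noteq> c {[1,0],[1,2]}" by (rule cf[OF C]) (simp_all add: sadj_Suc K3_adj_def numeral_2_eq_2)
  then have d6: "c {[0,1],[0,2]} \<noteq> c {[1,0],[1,2]}" by (simp add: insert_commute)
  show ?thesis by (rule card4[OF r d1 d3 d4 d5 d6 d2])
qed

definition colr :: "('a \<Rightarrow> 'a \<Rightarrow> nat) \<Rightarrow> 'a set \<Rightarrow> nat" where
  "colr f S = f (fst (SOME p. S = {fst p, snd p})) (snd (SOME p. S = {fst p, snd p}))"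

lemma colr_eq: assumes sym: "\<And>x y. f x y = f y x" shows "colr f {x, y} = f x y"
proof -
  have "\<exists>p. {x, y} = {fst p, snd p}" by (rule exI[of _ "(x, y)"]) simp
  then have "{x, y} = {fst (SOME p. {x, y} = {fst p, snd p}), snd (SOME p. {x, y} = {fst p, snd p})}"
    by (rule someI_ex)
  then show ?thesis unfolding colr_def using sym by (auto simp: doubleton_eq_iff)
qed

lemma coloring_of:
  assumes V: "valid E f" and R: "\<And>x y. E x y \<Longrightarrow> f x y \<in> {1..k}" and sym: "\<And>x y. f x y = f y x"
  shows "inj_edge_coloring E k (colr f)"
  unfolding inj_edge_coloring_def colr_eq[OF sym] using V R unfolding valid_def by blast

lemma h2_sym: "h2 x y = h2 y x" by (simp add: h2_def add.commute)

lemma all_ge2: "n \<ge> 2 \<Longrightarrow> valid (S3 n) g \<and> rng n \<and> cA n \<and> cD n"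
proof (induction n rule: dec_induct)
  case base
  show ?case using valid_2g rng_2g cA_2 cD_2 unfolding rng_def cA_def cD_def by blast
next
  case (step m)
  then show ?case using step_lemma[of m] by blast
qed

theorem mainTheorem5:
  shows "inj_chromatic_index (S3 1) = 3 \<and> inj_chromatic_index (S3 2) = 4 \<and>
         (\<forall>n\<ge>3. inj_chromatic_index (S3 n) = 5)"
proof (intro conjI allI impI)
  show "inj_chromatic_index (S3 1) = 3"
    unfolding inj_chromatic_index_def
  proof (rule Least_equality)
    show "\<exists>c. inj_edge_coloring (S3 1) 3 c"
      using coloring_of[OF valid_1 rng_1 g_sym] by blast
    show "\<And>y. \<exists>c. inj_edge_coloring (S3 1) y c \<Longrightarrow> 3 \<le> y" using lb1 by blast
  qed
  show "inj_chromatic_index (S3 2) = 4"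
    unfolding inj_chromatic_index_def
  proof (rule Least_equality)
    show "\<exists>c. inj_edge_coloring (S3 2) 4 c"
      using coloring_of[OF valid_2h rng_2h h2_sym] by blast
    show "\<And>y. \<exists>c. inj_edge_coloring (S3 2) y c \<Longrightarrow> 4 \<le> y" using lb2 by blast
  qed
  fix n :: nat assume n3: "3 \<le> n"
  show "inj_chromatic_index (S3 n) = 5"
    unfolding inj_chromatic_index_def
  proof (rule Least_equality)
    have "valid (S3 n) g \<and> rng n" using all_ge2 n3 by simp
    then show "\<exists>c. inj_edge_coloring (S3 n) 5 c"
      using coloring_of[where E="S3 n" and f=g and k=5] g_sym unfolding rng_def by blast
    show "5 \<le> y" if "\<exists>c. inj_edge_coloring (S3 n) y c" for y
    proof (rule ccontr)
      assume "\<not> 5 \<le> y"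
      then have "y \<le> 4" by simp
      from that obtain c where "inj_edge_coloring (S3 n) y c" by blast
      from mono3[OF this n3] lb3 \<open>y \<le> 4\<close> show False by blast
    qed
  qed
qed

end
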